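(* Fix $T\ge2$, a measurable $f:\mathbb R^{d_x}\to\mathbb R^{d_x}$, a matrix $H\in\mathbb R^{d_x\times d_x}$, and $R\ge\sqrt{d_x}+\sqrt{6\log T}$. Let $\{W_t\}$, $\{W'_t\}$ be i.i.d. $N(0,I_{d_x})$ sequences, $\bar W_t=W'_t\mathbf 1\{\|W'_t\|_2\le R\}$, and define $$X_{t+1}=f(X_t)+HW_t,\ X_0=HW_0;\qquad \bar X_{t+1}=f(\bar X_t)+H\bar W_t,\ \bar X_0=H\bar W_0.$$ Let $\mathsf P_{\bar X}$ be the joint law of $\{\bar X_t\}_{t=0}^{T-1}$. Then $$\|\Gamma_{\mathsf{dep}}(\mathsf P_{\bar X})\|_{op}\le3+\sqrt2\sum_{k=1}^{T-1}\max_{t=0,\dots,T-1-k}\ \operatorname*{ess\,sup}_{x\in\bar{\mathsf X}_t}\sqrt{\|\mathsf P_{X_{t+k}}(\cdot\mid X_t=x)-\mathsf P_{X_{t+k}}\|_{\mathsf{TV}}},$$ where the essential supremum is with respect to the law of $\bar X_t$, whose range is denoted $\bar{\mathsf X}_t$.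
   Context: Dependency matrix: for a process $\{Z_t\}_{t=0}^{T-1}$ with law $\mathsf P_Z$, $\Gamma_{\mathsf{dep}}(\mathsf P_Z)\in\mathbb R^{T\times T}$ is upper triangular with $\Gamma_{ii}=1$, $\Gamma_{ij}=0$ for $i>j$, and for $i<j$, $\Gamma_{ij}=\sqrt{2\sup_{A\in\mathcal Z_{0:i}}\|\mathsf P_{Z_{j:T-1}}(\cdot\mid A)-\mathsf P_{Z_{j:T-1}}\|_{\mathsf{TV}}}$, with $\mathcal Z_{0:i}$ the $\sigma$-algebra generated by $Z_{0:i}$. $\|\mu-\nu\|_{\mathsf{TV}}=\sup_A|\mu(A)-\nu(A)|$; $\|\cdot\|_{op}$ is the operator norm. *)

theory Defs
  imports "HOL-Probability.Probability"
begin

definition std_gauss_density :: "real^'d \<Rightarrow> real" where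
  "std_gauss_density x = (2 * pi) powr (- real CARD('d) / 2) * exp (- (norm x)\<^sup>2 / 2)"

definition tv_dist :: "'a measure \<Rightarrow> 'a measure \<Rightarrow> real" where
  "tv_dist \<mu> \<nu> = (SUP A \<in> sets \<mu>. \<bar>measure \<mu> A - measure \<nu> A\<bar>)"

abbreviation path_space :: "nat \<Rightarrow> (nat \<Rightarrow> real^'d) measure" where
  "path_space T \<equiv> PiM {..<T} (\<lambda>_. borel)"

definition past_events :: "nat \<Rightarrow> nat \<Rightarrow> (nat \<Rightarrow> real^'d) set set" where
  "past_events T i = {(\<lambda>z. restrict z {..i}) -` B \<inter> space (path_space T) | B.
                        B \<in> sets (PiM {..i} (\<lambda>_. (borel :: (real^'d) measure)))}"

definition future_law :: "nat \<Rightarrow> nat \<Rightarrow> (nat \<Rightarrow> real^'d) measure \<Rightarrow> (nat \<Rightarrow> real^'d) measure" where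
  "future_law T j P = distr P (PiM {j..<T} (\<lambda>_. borel)) (\<lambda>z. restrict z {j..<T})"

text \<open>Dependency matrix Gamma_dep(P) (indices 0..T-1) of a law P on the path space.
  P(. | A) is the conditional measure uniform_measure P A = P(. \<inter> A)/P(A), for P(A) > 0.\<close>
definition gamma_dep :: "nat \<Rightarrow> (nat \<Rightarrow> real^'d) measure \<Rightarrow> nat \<Rightarrow> nat \<Rightarrow> real" where
  "gamma_dep T P i j =
     (if i = j then 1 else if j < i then 0 else
      sqrt (2 * (SUP A \<in> {A \<in> past_events T i. measure P A > 0}.
                   tv_dist (future_law T j (uniform_measure P A)) (future_law T j P))))"

definition op_norm :: "nat \<Rightarrow> (nat \<Rightarrow> nat \<Rightarrow> real) \<Rightarrow> real" where
  "op_norm n A = (SUP x \<in> {x :: nat \<Rightarrow> real. (\<Sum>j<n. (x j)\<^sup>2) \<le> 1}.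
                    sqrt (\<Sum>i<n. (\<Sum>j<n. A i j * x j)\<^sup>2))"

fun chain_from :: "(real^'d \<Rightarrow> real^'d) \<Rightarrow> real^'d^'d \<Rightarrow> real^'d \<Rightarrow> (nat \<Rightarrow> real^'d) \<Rightarrow> nat \<Rightarrow> real^'d" where
  "chain_from f H x0 w 0 = x0"
| "chain_from f H x0 w (Suc s) = f (chain_from f H x0 w s) + H *v w s"

text \<open>The process X_0 = H W_0, X_{t+1} = f(X_t) + H W_{t+1} (fresh noise at every step).\<close>
definition proc :: "(real^'d \<Rightarrow> real^'d) \<Rightarrow> real^'d^'d \<Rightarrow> (nat \<Rightarrow> 'a \<Rightarrow> real^'d) \<Rightarrow> nat \<Rightarrow> 'a \<Rightarrow> real^'d" where
  "proc f H W t \<omega> = chain_from f H (H *v W 0 \<omega>) (\<lambda>s. W (Suc s) \<omega>) t"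

text \<open>Conditional law P_{X_{t+k}}(. | X_t = x): the k-step transition of the chain from x,
  driven by the noises W_{t+1}, ..., W_{t+k} (which are independent of X_t).\<close>
definition cond_law :: "'a measure \<Rightarrow> (real^'d \<Rightarrow> real^'d) \<Rightarrow> real^'d^'d \<Rightarrow> (nat \<Rightarrow> 'a \<Rightarrow> real^'d)
    \<Rightarrow> nat \<Rightarrow> nat \<Rightarrow> real^'d \<Rightarrow> (real^'d) measure" where
  "cond_law M f H W t k x = distr M borel (\<lambda>\<omega>. chain_from f H x (\<lambda>s. W (t + Suc s) \<omega>) k)"

end

theory Submission
  imports Defs
begin

lemma gauss_density_prod:
  "std_gauss_density (x::real^'d) = (\<Prod>b\<in>Basis. (2*pi) powr (-1/2) * exp (-(x \<bullet> b)\<^sup>2/2))"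
proof -
  have "(\<Prod>b\<in>(Basis::(real^'d) set). (2*pi) powr (-1/2) * exp (-(x \<bullet> b)\<^sup>2/2))
     = (\<Prod>b\<in>(Basis::(real^'d) set). (2*pi) powr (-1/2)) * (\<Prod>b\<in>(Basis::(real^'d) set). exp (-(x \<bullet> b)\<^sup>2/2))"
    by (rule prod.distrib)
  also have "(\<Prod>b\<in>(Basis::(real^'d) set). (2*pi) powr (-1/2)) = (2*pi) powr (- real CARD('d)/2)"
    by (simp add: powr_realpow[symmetric] powr_powr)
  also have "(\<Prod>b\<in>(Basis::(real^'d) set). exp (-(x \<bullet> b)\<^sup>2/2)) = exp (- (\<Sum>b\<in>(Basis::(real^'d) set). (x \<bullet> b)\<^sup>2)/2)"
    by (simp add: exp_sum[symmetric] sum_divide_distrib sum_negf)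
  also have "(\<Sum>b\<in>(Basis::(real^'d) set). (x \<bullet> b)\<^sup>2) = (norm x)\<^sup>2"
    using euclidean_inner[of x x] power2_norm_eq_inner[of x] by (simp add: power2_eq_square)
  finally show ?thesis by (simp add: std_gauss_density_def)
qed

lemma mgf_1d:
  fixes l :: real
  assumes "0 \<le> l" "l < 1/2"
  shows "(\<integral>\<^sup>+t. ennreal (exp (l * t\<^sup>2) * ((2*pi) powr (-1/2) * exp (-t\<^sup>2/2))) \<partial>lborel)
         = ennreal (1 / sqrt (1 - 2*l))"
proof -
  define c where "c = 1 - 2*l"
  have c: "c > 0" using assms by (simp add: c_def)
  have pt: "exp (l * t\<^sup>2) * ((2*pi) powr (-1/2) * exp (-t\<^sup>2/2))
      = (1 / sqrt c) * normal_density 0 (1 / sqrt c) t" for t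
  proof -
    have "exp (l * t\<^sup>2) * exp (-t\<^sup>2/2) = exp (- (c * t\<^sup>2) / 2)"
      proof -
        have "l*t\<^sup>2 + -t\<^sup>2/2 = -(c*t\<^sup>2)/2" by (simp add: c_def field_simps)
        then show ?thesis by (simp only: exp_add[symmetric])
      qed
    moreover have "(2*pi) powr (-1/2) = 1 / sqrt (2*pi)"
    proof -
      have "(2*pi) powr (-1/2) = inverse ((2*pi) powr (1/2))"
        proof -
          have "(-1/2::real) = -(1/2)" by simp
          then show ?thesis using powr_minus[of "2*pi" "1/2"] by (simp only:)
        qed
      then show ?thesis using powr_half_sqrt[of "2*pi"] by (simp add: inverse_eq_divide)
    qed
    moreover have "(1 / sqrt c) * normal_density 0 (1 / sqrt c) t = 1 / sqrt (2*pi) * exp (- (c * t\<^sup>2) / 2)"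
    proof -
      have sq: "(1 / sqrt c)\<^sup>2 = 1 / c" using c by (simp add: power_divide)
      have e: "-(t - 0)\<^sup>2 / (2 * (1 / sqrt c)\<^sup>2) = - (c * t\<^sup>2) / 2"
        unfolding sq using c by simp
      have "sqrt (2 * pi * (1 / sqrt c)\<^sup>2) = sqrt (2*pi) / sqrt c"
        unfolding sq using c by (simp add: real_sqrt_mult real_sqrt_divide)
      then have "(1 / sqrt c) * (1 / sqrt (2 * pi * (1 / sqrt c)\<^sup>2)) = 1 / sqrt (2*pi)"
        using c by simp
      then show ?thesis unfolding normal_density_def e by (simp only: mult.assoc[symmetric])
    qed
    ultimately show ?thesis by (metis mult.left_commute)
  qed
  have "(\<integral>\<^sup>+t. ennreal (exp (l * t\<^sup>2) * ((2*pi) powr (-1/2) * exp (-t\<^sup>2/2))) \<partial>lborel)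
      = (\<integral>\<^sup>+t. ennreal (1 / sqrt c) * ennreal (normal_density 0 (1 / sqrt c) t) \<partial>lborel)"
  proof (rule nn_integral_cong)
    fix t
    show "ennreal (exp (l * t\<^sup>2) * ((2*pi) powr (-1/2) * exp (-t\<^sup>2/2))) =
          ennreal (1 / sqrt c) * ennreal (normal_density 0 (1 / sqrt c) t)"
      unfolding pt using c by (intro ennreal_mult) auto
  qed
  also have "\<dots> = ennreal (1 / sqrt c) * (\<integral>\<^sup>+t. ennreal (normal_density 0 (1 / sqrt c) t) \<partial>lborel)"
    by (rule nn_integral_cmult) (simp add: normal_density_def)
  also have "(\<integral>\<^sup>+t. ennreal (normal_density 0 (1 / sqrt c) t) \<partial>lborel) = 1"
  proof -
    interpret p: prob_space "density lborel (\<lambda>t. ennreal (normal_density 0 (1 / sqrt c) t))"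
      by (rule prob_space_normal_density) (use c in auto)
    show ?thesis using p.emeasure_space_1
      by (simp add: emeasure_density normal_density_def)
  qed
  finally show ?thesis by (simp add: c_def)
qed

lemma mgf_gauss:
  fixes l :: real
  assumes "0 \<le> l" "l < 1/2"
  shows "(\<integral>\<^sup>+x. ennreal (exp (l * (norm x)\<^sup>2) * std_gauss_density (x::real^'d)) \<partial>lborel)
         = ennreal ((1 / sqrt (1 - 2*l)) ^ CARD('d))"
proof -
  define g where "g = (\<lambda>t::real. ennreal (exp (l * t\<^sup>2) * ((2*pi) powr (-1/2) * exp (-t\<^sup>2/2))))"
  have pt: "ennreal (exp (l * (norm x)\<^sup>2) * std_gauss_density (x::real^'d)) = (\<Prod>b\<in>Basis. g (x \<bullet> b))" for x
  proof -
    have "(norm x)\<^sup>2 = (\<Sum>b\<in>(Basis::(real^'d) set). (x \<bullet> b)\<^sup>2)"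
      using euclidean_inner[of x x] power2_norm_eq_inner[of x] by (simp add: power2_eq_square)
    then have "exp (l * (norm x)\<^sup>2) = (\<Prod>b\<in>(Basis::(real^'d) set). exp (l * (x \<bullet> b)\<^sup>2))"
      by (simp add: sum_distrib_left exp_sum)
    then have "exp (l * (norm x)\<^sup>2) * std_gauss_density x = (\<Prod>b\<in>(Basis::(real^'d) set). exp (l * (x \<bullet> b)\<^sup>2) * ((2*pi) powr (-1/2) * exp (-(x \<bullet> b)\<^sup>2/2)))"
      by (simp add: gauss_density_prod prod.distrib)
    then show ?thesis unfolding g_def
      by (simp add: prod_ennreal)
  qed
  have "(\<integral>\<^sup>+x. ennreal (exp (l * (norm x)\<^sup>2) * std_gauss_density (x::real^'d)) \<partial>lborel)
      = (\<integral>\<^sup>+x. (\<Prod>b\<in>Basis. g ((x::real^'d) \<bullet> b)) \<partial>lborel)"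
    by (simp add: pt)
  also have "\<dots> = (\<Prod>b\<in>(Basis::(real^'d) set). (\<integral>\<^sup>+t. g t \<partial>lborel))"
    by (rule nn_integral_lborel_prod) (auto simp: g_def)
  also have "\<dots> = ennreal (1 / sqrt (1 - 2*l)) ^ CARD('d)"
    using mgf_1d[OF assms] by (simp add: g_def)
  finally show ?thesis using ennreal_power[of "1/sqrt(1-2*l)" "CARD('d)"] using assms by simp
qed

lemma gauss_tail:
  fixes W :: "'a \<Rightarrow> real^'d" and s R :: real
  assumes M: "prob_space M" and D: "distributed M lborel W (\<lambda>x. ennreal (std_gauss_density x))"
    and s: "0 \<le> s" and R: "sqrt (real CARD('d)) + s \<le> R"
  shows "measure M {\<omega>\<in>space M. R < norm (W \<omega>)} \<le> exp (-(s\<^sup>2)/2)"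
proof -
  interpret prob_space M by (rule M)
  define d where "d = real CARD('d)"
  define q where "q = sqrt d"
  have d1: "d \<ge> 1" unfolding d_def by simp
  have q: "q > 0" "q\<^sup>2 = d" using d1 by (auto simp: q_def)
  define u where "u = R - q"
  have u: "u \<ge> s" using R by (simp add: u_def q_def d_def)
  have Rq: "R = q + u" by (simp add: u_def)
  have Rpos: "R > 0" using q u s Rq by linarith
  define l where "l = (1 - d / R\<^sup>2) / 2"
  have dR: "d / R\<^sup>2 > 0" "d / R\<^sup>2 \<le> 1"
  proof -
    show "d / R\<^sup>2 > 0" using d1 Rpos by simp
    have "q \<le> R" using Rq u s by linarith
    then have "q\<^sup>2 \<le> R\<^sup>2" using q by (intro power_mono) auto
    then show "d / R\<^sup>2 \<le> 1" using q Rpos by simp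
  qed
  define cc where "cc = d / R\<^sup>2"
  have l1: "0 \<le> l" using dR(2) unfolding l_def cc_def[symmetric] by simp
  have l2: "l < 1/2" using dR(1) unfolding l_def cc_def[symmetric] by simp
  note l = l1 l2
  have c: "1 - 2*l = d / R\<^sup>2" unfolding l_def cc_def[symmetric] by (simp add: field_simps)
  have sc: "1 / sqrt (1 - 2*l) = R / q"
    unfolding c q_def using Rpos d1 by (simp add: real_sqrt_divide)
  have Wm: "W \<in> borel_measurable M" using distributed_measurable[OF D] by simp
  define S where "S = {\<omega>\<in>space M. R < norm (W \<omega>)}"
  have Sm: "S \<in> sets M" unfolding S_def using Wm by measurable
  have "ennreal (exp (l * R\<^sup>2)) * emeasure M S = (\<integral>\<^sup>+\<omega>. ennreal (exp (l * R\<^sup>2)) * indicator S \<omega> \<partial>M)"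
    using Sm by (simp add: nn_integral_cmult_indicator)
  also have "\<dots> \<le> (\<integral>\<^sup>+\<omega>. ennreal (exp (l * (norm (W \<omega>))\<^sup>2)) \<partial>M)"
  proof (rule nn_integral_mono)
    fix \<omega> assume "\<omega> \<in> space M"
    show "ennreal (exp (l * R\<^sup>2)) * indicator S \<omega> \<le> ennreal (exp (l * (norm (W \<omega>))\<^sup>2))"
    proof (cases "\<omega> \<in> S")
      case True
      then have "R < norm (W \<omega>)" by (simp add: S_def)
      then have "R\<^sup>2 \<le> (norm (W \<omega>))\<^sup>2" using Rpos by (intro power_mono) auto
      then have "l * R\<^sup>2 \<le> l * (norm (W \<omega>))\<^sup>2" using l by (intro mult_left_mono) auto
      then show ?thesis using True by (simp add: ennreal_leI)
    qed simp
  qed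
  also have "\<dots> = (\<integral>\<^sup>+x. ennreal (exp (l * (norm x)\<^sup>2)) \<partial>(distr M lborel W))"
    using distributed_measurable[OF D] by (simp add: nn_integral_distr)
  also have "\<dots> = (\<integral>\<^sup>+x. ennreal (exp (l * (norm x)\<^sup>2)) \<partial>(density lborel (\<lambda>x. ennreal (std_gauss_density (x::real^'d)))))"
    by (simp add: distributed_distr_eq_density[OF D])
  also have "\<dots> = (\<integral>\<^sup>+x. ennreal (std_gauss_density (x::real^'d)) * ennreal (exp (l * (norm x)\<^sup>2)) \<partial>lborel)"
    by (rule nn_integral_density) (auto simp: std_gauss_density_def)
  also have "\<dots> = (\<integral>\<^sup>+x. ennreal (exp (l * (norm x)\<^sup>2) * std_gauss_density (x::real^'d)) \<partial>lborel)"
    by (intro nn_integral_cong) (simp add: ennreal_mult[symmetric] std_gauss_density_def mult.commute)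
  also have "\<dots> = ennreal ((R / q) ^ CARD('d))"
    using mgf_gauss[OF l, where 'd='d] sc by simp
  finally have "ennreal (exp (l * R\<^sup>2)) * emeasure M S \<le> ennreal ((R / q) ^ CARD('d))" .
  then have "ennreal (exp (l * R\<^sup>2) * measure M S) \<le> ennreal ((R / q) ^ CARD('d))"
    by (simp add: emeasure_eq_measure ennreal_mult)
  then have "exp (l * R\<^sup>2) * measure M S \<le> (R / q) ^ CARD('d)"
    using q Rpos by (subst (asm) ennreal_le_iff) auto
  then have "measure M S \<le> (R / q) ^ CARD('d) / exp (l * R\<^sup>2)"
    by (subst pos_le_divide_eq) (auto simp: mult.commute)
  then have m: "measure M S \<le> (R / q) ^ CARD('d) * exp (- (l * R\<^sup>2))"
    by (simp add: exp_minus divide_inverse)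
  have "(R / q) ^ CARD('d) = exp (d * ln (R / q))"
    using q Rpos by (simp add: d_def exp_of_nat_mult[symmetric] ln_realpow[symmetric])
  also have "\<dots> \<le> exp (q * u)"
  proof -
    have "ln (R / q) = ln (1 + u / q)" using q by (simp add: Rq field_simps)
    also have "\<dots> \<le> u / q" using q u s by (intro ln_add_one_self_le_self) auto
    finally have "d * ln (R / q) \<le> d * (u / q)" using d1 by (intro mult_left_mono) auto
    also have "d * (u / q) = q * u" using q by (simp add: power2_eq_square field_simps)
    finally show ?thesis by simp
  qed
  finally have "measure M S \<le> exp (q * u) * exp (- (l * R\<^sup>2))"
    using m by (meson exp_gt_zero less_imp_le mult_right_mono order_trans)
  also have "\<dots> = exp (- (u\<^sup>2) / 2)"
  proof -
    have "l * R\<^sup>2 = (R\<^sup>2 - d) / 2" using Rpos by (simp add: l_def field_simps)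
    also have "\<dots> = q * u + u\<^sup>2 / 2" using q by (simp add: Rq power2_eq_square field_simps)
    finally show ?thesis by (simp add: exp_add[symmetric])
  qed
  also have "\<dots> \<le> exp (- (s\<^sup>2) / 2)"
    using u s by (simp add: power_mono)
  finally show ?thesis by (simp add: S_def)
qed

lemma L2_set_sum_ineq:
  assumes "finite K"
  shows "L2_set (\<lambda>i. \<Sum>k\<in>K. f k i) A \<le> (\<Sum>k\<in>K. L2_set (f k) A)"
  using assms
proof (induction K rule: finite_induct)
  case empty
  then show ?case by (simp add: L2_set_def)
next
  case (insert a K)
  have "L2_set (\<lambda>i. \<Sum>k\<in>insert a K. f k i) A = L2_set (\<lambda>i. f a i + (\<Sum>k\<in>K. f k i)) A"
    using insert by simp
  also have "\<dots> \<le> L2_set (f a) A + L2_set (\<lambda>i. \<Sum>k\<in>K. f k i) A"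
    by (rule L2_set_triangle_ineq)
  also have "\<dots> \<le> L2_set (f a) A + (\<Sum>k\<in>K. L2_set (f k) A)"
    using insert by simp
  finally show ?case using insert by simp
qed

lemma L2_set_abs: "L2_set (\<lambda>i. \<bar>f i\<bar>) A = L2_set f A"
  unfolding L2_set_def by simp

lemma op_norm_bound:
  fixes A :: "nat \<Rightarrow> nat \<Rightarrow> real" and b :: "nat \<Rightarrow> real"
  assumes Ab: "\<And>i j. i < n \<Longrightarrow> j < n \<Longrightarrow> \<bar>A i j\<bar> \<le> (if i \<le> j then b (j - i) else 0)"
    and b0: "\<And>k. 0 \<le> b k"
  shows "op_norm n A \<le> (\<Sum>k<n. b k)"
  unfolding op_norm_def
proof (rule cSUP_least)
  show "{x :: nat \<Rightarrow> real. (\<Sum>j<n. (x j)\<^sup>2) \<le> 1} \<noteq> {}"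
  proof -
    have "(\<lambda>_. 0::real) \<in> {x :: nat \<Rightarrow> real. (\<Sum>j<n. (x j)\<^sup>2) \<le> 1}" by simp
    then show ?thesis by (metis empty_iff)
  qed
next
  fix x :: "nat \<Rightarrow> real"
  assume "x \<in> {x. (\<Sum>j<n. (x j)\<^sup>2) \<le> 1}"
  then have x1: "(\<Sum>j<n. (x j)\<^sup>2) \<le> 1" by (simp only: mem_Collect_eq)
  define y where "y i = (\<Sum>j<n. A i j * x j)" for i
  define z where "z k i = (if i + k < n then \<bar>x (i + k)\<bar> else 0)" for k i
  have yb: "\<bar>y i\<bar> \<le> (\<Sum>k<n. b k * z k i)" if i: "i < n" for i
  proof -
    have "\<bar>y i\<bar> \<le> (\<Sum>j<n. \<bar>A i j * x j\<bar>)" unfolding y_def by (rule sum_abs)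
    also have "\<dots> \<le> (\<Sum>j<n. (if i \<le> j then b (j - i) else 0) * \<bar>x j\<bar>)"
    proof (intro sum_mono)
      fix j assume "j \<in> {..<n}"
      then have "\<bar>A i j\<bar> \<le> (if i \<le> j then b (j - i) else 0)" using Ab i by simp
      then show "\<bar>A i j * x j\<bar> \<le> (if i \<le> j then b (j - i) else 0) * \<bar>x j\<bar>"
        unfolding abs_mult by (rule mult_right_mono) simp
    qed
    also have "\<dots> = (\<Sum>j<n. \<Sum>k<n. (if j = i + k then b k * \<bar>x j\<bar> else 0))"
    proof (intro sum.cong refl)
      fix j assume j: "j \<in> {..<n}"
      show "(if i \<le> j then b (j - i) else 0) * \<bar>x j\<bar> = (\<Sum>k<n. (if j = i + k then b k * \<bar>x j\<bar> else 0))"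
      proof (cases "i \<le> j")
        case True
        have "(\<Sum>k<n. (if j = i + k then b k * \<bar>x j\<bar> else 0)) = (\<Sum>k<n. (if k = j - i then b k * \<bar>x j\<bar> else 0))"
          using True by (intro sum.cong refl) auto
        also have "\<dots> = b (j - i) * \<bar>x j\<bar>" using j by (simp add: sum.delta')
        finally show ?thesis using True by simp
      next
        case False
        then show ?thesis by (auto intro!: sum.neutral)
      qed
    qed
    also have "\<dots> = (\<Sum>k<n. \<Sum>j<n. (if j = i + k then b k * \<bar>x j\<bar> else 0))"
      by (rule sum.swap)
    also have "\<dots> = (\<Sum>k<n. b k * z k i)"
    proof (intro sum.cong refl)
      fix k
      show "(\<Sum>j<n. (if j = i + k then b k * \<bar>x j\<bar> else 0)) = b k * z k i"
        by (simp add: sum.delta z_def)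
    qed
    finally show ?thesis .
  qed
  have zb: "L2_set (z k) {..<n} \<le> 1" for k
  proof -
    have "(\<Sum>i<n. (z k i)\<^sup>2) = (\<Sum>i\<in>{i. i < n \<and> i + k < n}. (x (i + k))\<^sup>2)"
      by (rule sum.mono_neutral_cong_right) (auto simp: z_def)
    also have "\<dots> = (\<Sum>j\<in>(\<lambda>i. i + k) ` {i. i < n \<and> i + k < n}. (x j)\<^sup>2)"
      by (subst sum.reindex) (auto simp: inj_on_def)
    also have "\<dots> \<le> (\<Sum>j<n. (x j)\<^sup>2)"
      by (rule sum_mono2) auto
    finally have "(\<Sum>i<n. (z k i)\<^sup>2) \<le> 1" using x1 by simp
    then show ?thesis unfolding L2_set_def by simp
  qed
  have "sqrt (\<Sum>i<n. (\<Sum>j<n. A i j * x j)\<^sup>2) = L2_set y {..<n}"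
    by (simp add: L2_set_def y_def)
  also have "\<dots> = L2_set (\<lambda>i. \<bar>y i\<bar>) {..<n}" by (simp add: L2_set_abs)
  also have "\<dots> \<le> L2_set (\<lambda>i. \<Sum>k<n. b k * z k i) {..<n}"
    by (rule L2_set_mono) (auto intro: yb)
  also have "\<dots> \<le> (\<Sum>k<n. L2_set (\<lambda>i. b k * z k i) {..<n})"
    by (rule L2_set_sum_ineq) simp
  also have "\<dots> = (\<Sum>k<n. b k * L2_set (z k) {..<n})"
    by (intro sum.cong refl) (simp add: L2_set_right_distrib b0)
  also have "\<dots> \<le> (\<Sum>k<n. b k)"
    by (intro sum_mono) (auto intro: mult_left_le zb b0)
  finally show "sqrt (\<Sum>i<n. (\<Sum>j<n. A i j * x j)\<^sup>2) \<le> (\<Sum>k<n. b k)" .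
qed

section \<open>Chains\<close>

lemma chain_from_add:
  "chain_from f H x0 w (a + b) = chain_from f H (chain_from f H x0 w a) (\<lambda>s. w (a + s)) b"
  by (induction b) auto

lemma chain_from_cong:
  "(\<And>s. s < k \<Longrightarrow> w s = w' s) \<Longrightarrow> chain_from f H x0 w k = chain_from f H x0 w' k"
  by (induction k) auto

lemma mult_vec_borel: "(\<lambda>x. (H::real^'d^'d) *v x) \<in> borel_measurable borel"
  by (intro borel_measurable_continuous_onI matrix_vector_mult_linear_continuous_on)

lemma chain_meas:
  assumes f: "f \<in> borel_measurable borel"
    and X0: "X0 \<in> borel_measurable N"
    and ws: "\<And>s. s < k \<Longrightarrow> (\<lambda>n. ws n s) \<in> borel_measurable N"
  shows "(\<lambda>n. chain_from f H (X0 n) (ws n) k) \<in> borel_measurable N"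
  using ws
proof (induction k)
  case 0
  then show ?case using X0 by simp
next
  case (Suc k)
  have a: "(\<lambda>n. chain_from f H (X0 n) (ws n) k) \<in> borel_measurable N"
    using Suc by simp
  have b: "(\<lambda>n. f (chain_from f H (X0 n) (ws n) k)) \<in> borel_measurable N"
    using measurable_compose[OF a f] by simp
  have c: "(\<lambda>n. H *v ws n k) \<in> borel_measurable N"
    using measurable_compose[OF Suc.prems[of k] mult_vec_borel] by simp
  show ?case using b c by simp
qed

section \<open>Total variation\<close>

lemma tv_le:
  assumes "prob_space \<mu>" "prob_space \<nu>" "sets \<mu> = sets \<nu>" "A \<in> sets \<mu>"
  shows "\<bar>measure \<mu> A - measure \<nu> A\<bar> \<le> tv_dist \<mu> \<nu>"
  unfolding tv_dist_def
proof (rule cSUP_upper)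
  show "A \<in> sets \<mu>" by fact
  show "bdd_above ((\<lambda>A. \<bar>measure \<mu> A - measure \<nu> A\<bar>) ` sets \<mu>)"
  proof (rule bdd_aboveI2)
    fix B
    have "measure \<mu> B \<le> 1" "measure \<nu> B \<le> 1"
      using assms(1,2) by (auto intro: prob_space.prob_le_1)
    moreover have "0 \<le> measure \<mu> B" "0 \<le> measure \<nu> B" by auto
    ultimately show "\<bar>measure \<mu> B - measure \<nu> B\<bar> \<le> 1"
      unfolding abs_le_iff by (intro conjI; linarith)
  qed
qed

lemma tv_nonneg:
  assumes "prob_space \<mu>" "prob_space \<nu>" "sets \<mu> = sets \<nu>"
  shows "0 \<le> tv_dist \<mu> \<nu>"
  using tv_le[OF assms, of "{}"] by simp

lemma tv_least:
  assumes "\<And>A. A \<in> sets \<mu> \<Longrightarrow> \<bar>measure \<mu> A - measure \<nu> A\<bar> \<le> c"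
  shows "tv_dist \<mu> \<nu> \<le> c"
  unfolding tv_dist_def
proof (rule cSUP_least)
  show "sets \<mu> \<noteq> {}" using sets.empty_sets by blast
qed (rule assms)

lemma tv_triangle:
  assumes "prob_space \<mu>" "prob_space \<nu>" "prob_space \<rho>" "sets \<mu> = sets \<rho>" "sets \<rho> = sets \<nu>"
  shows "tv_dist \<mu> \<nu> \<le> tv_dist \<mu> \<rho> + tv_dist \<rho> \<nu>"
proof (rule tv_least)
  fix A assume A: "A \<in> sets \<mu>"
  have "\<bar>measure \<mu> A - measure \<nu> A\<bar> \<le> \<bar>measure \<mu> A - measure \<rho> A\<bar> + \<bar>measure \<rho> A - measure \<nu> A\<bar>"
    by linarith
  also have "\<dots> \<le> tv_dist \<mu> \<rho> + tv_dist \<rho> \<nu>"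
    using A assms by (intro add_mono tv_le) auto
  finally show "\<bar>measure \<mu> A - measure \<nu> A\<bar> \<le> tv_dist \<mu> \<rho> + tv_dist \<rho> \<nu>" .
qed

lemma tv_sym:
  assumes "sets \<mu> = sets \<nu>"
  shows "tv_dist \<mu> \<nu> = tv_dist \<nu> \<mu>"
  unfolding tv_dist_def assms by (simp add: abs_minus_commute)

lemma layer_cake_01:
  assumes phi: "phi \<in> borel_measurable \<mu>" and p01: "\<And>x. 0 \<le> phi x" "\<And>x. phi x \<le> (1::real)"
    and sf: "sigma_finite_measure \<mu>"
  shows "(\<integral>\<^sup>+x. ennreal (phi x) \<partial>\<mu>)
       = (\<integral>\<^sup>+s. indicator {0..1} s * emeasure \<mu> {x\<in>space \<mu>. s < phi x} \<partial>lborel)"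
proof -
  interpret pair_sigma_finite \<mu> lborel
    by (intro pair_sigma_finite.intro sf) (rule sigma_finite_lborel)
  define g where "g x (s::real) = (indicator {0..1} s * indicator {x\<in>space \<mu>. s < phi x} x :: ennreal)" for x s
  have gm: "case_prod g \<in> borel_measurable (\<mu> \<Otimes>\<^sub>M lborel)"
    unfolding g_def using phi by measurable
  have inner1: "(\<integral>\<^sup>+s. g x s \<partial>lborel) = ennreal (phi x)" if x: "x \<in> space \<mu>" for x
  proof -
    have "(\<lambda>s. g x s) = indicator {0..<phi x}"
      using x p01[of x] by (auto simp: g_def fun_eq_iff split: split_indicator)
    then show ?thesis using p01[of x] by simp
  qed
  have inner2: "(\<integral>\<^sup>+x. g x s \<partial>\<mu>) = indicator {0..1} s * emeasure \<mu> {x\<in>space \<mu>. s < phi x}" for s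
  proof -
    have "(\<integral>\<^sup>+x. g x s \<partial>\<mu>) = indicator {0..1} s * (\<integral>\<^sup>+x. indicator {x\<in>space \<mu>. s < phi x} x \<partial>\<mu>)"
      unfolding g_def by (rule nn_integral_cmult) (use phi in measurable)
    also have "(\<integral>\<^sup>+x. indicator {x\<in>space \<mu>. s < phi x} x \<partial>\<mu>) = emeasure \<mu> {x\<in>space \<mu>. s < phi x}"
      by (rule nn_integral_indicator) (use phi in measurable)
    finally show ?thesis .
  qed
  have "(\<integral>\<^sup>+x. ennreal (phi x) \<partial>\<mu>) = (\<integral>\<^sup>+x. (\<integral>\<^sup>+s. g x s \<partial>lborel) \<partial>\<mu>)"
    by (intro nn_integral_cong) (simp add: inner1)
  also have "\<dots> = (\<integral>\<^sup>+s. (\<integral>\<^sup>+x. g x s \<partial>\<mu>) \<partial>lborel)"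
    by (rule Fubini'[OF gm, symmetric])
  also have "\<dots> = (\<integral>\<^sup>+s. indicator {0..1} s * emeasure \<mu> {x\<in>space \<mu>. s < phi x} \<partial>lborel)"
    by (simp add: inner2)
  finally show ?thesis .
qed

lemma emeasure_level_meas:
  assumes phi: "phi \<in> borel_measurable \<nu>" and sf: "sigma_finite_measure \<nu>"
  shows "(\<lambda>s::real. emeasure \<nu> {x\<in>space \<nu>. s < phi x}) \<in> borel_measurable lborel"
proof -
  interpret sigma_finite_measure \<nu> by (rule sf)
  have eq: "emeasure \<nu> {x\<in>space \<nu>. s < phi x} = (\<integral>\<^sup>+x. indicator {p \<in> space (lborel \<Otimes>\<^sub>M \<nu>). fst p < phi (snd p)} (s, x) \<partial>\<nu>)" for s
  proof -
    have "emeasure \<nu> {x\<in>space \<nu>. s < phi x} = (\<integral>\<^sup>+x. indicator {x\<in>space \<nu>. s < phi x} x \<partial>\<nu>)"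
      by (rule nn_integral_indicator[symmetric]) (use phi in measurable)
    also have "\<dots> = (\<integral>\<^sup>+x. indicator {p \<in> space (lborel \<Otimes>\<^sub>M \<nu>). fst p < phi (snd p)} (s, x) \<partial>\<nu>)"
      by (intro nn_integral_cong) (auto simp: space_pair_measure split: split_indicator)
    finally show ?thesis .
  qed
  have m: "(\<lambda>p. indicator {p \<in> space (lborel \<Otimes>\<^sub>M \<nu>). fst p < phi (snd p)} p :: ennreal) \<in> borel_measurable (lborel \<Otimes>\<^sub>M \<nu>)"
    using phi by measurable
  show ?thesis unfolding eq
    by (rule borel_measurable_nn_integral) (use m in \<open>simp add: case_prod_beta'\<close>)
qed

lemma tv_integral:
  assumes P: "prob_space \<mu>" "prob_space \<nu>" and S: "sets \<mu> = sets \<nu>"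
    and phi: "phi \<in> borel_measurable \<mu>" and p01: "\<And>x. 0 \<le> phi x" "\<And>x. phi x \<le> (1::real)"
  shows "(\<integral>\<^sup>+x. ennreal (phi x) \<partial>\<mu>) \<le> (\<integral>\<^sup>+x. ennreal (phi x) \<partial>\<nu>) + ennreal (tv_dist \<mu> \<nu>)"
proof -
  interpret m: prob_space \<mu> by (rule P)
  interpret n: prob_space \<nu> by (rule P)
  have phin: "phi \<in> borel_measurable \<nu>" using phi S by (simp cong: measurable_cong_sets)
  have sp: "space \<mu> = space \<nu>" using S by (rule sets_eq_imp_space_eq)
  have tv0: "0 \<le> tv_dist \<mu> \<nu>" by (rule tv_nonneg[OF P S])
  have le: "emeasure \<mu> {x\<in>space \<mu>. s < phi x} \<le> emeasure \<nu> {x\<in>space \<nu>. s < phi x} + ennreal (tv_dist \<mu> \<nu>)" for s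
  proof -
    have Am: "{x\<in>space \<mu>. s < phi x} \<in> sets \<mu>" using phi by measurable
    have eq: "{x\<in>space \<nu>. s < phi x} = {x\<in>space \<mu>. s < phi x}" using sp by simp
    have "measure \<mu> {x\<in>space \<mu>. s < phi x} \<le> measure \<nu> {x\<in>space \<mu>. s < phi x} + tv_dist \<mu> \<nu>"
      using tv_le[OF P S Am] by linarith
    then show ?thesis
      unfolding eq m.emeasure_eq_measure n.emeasure_eq_measure
      by (simp add: ennreal_plus[symmetric] tv0 del: ennreal_plus)
  qed
  have lvm[measurable]: "(\<lambda>s::real. emeasure \<nu> {x\<in>space \<nu>. s < phi x}) \<in> borel_measurable lborel"
    using emeasure_level_meas[OF phin n.sigma_finite_measure_axioms] .
  have "(\<integral>\<^sup>+x. ennreal (phi x) \<partial>\<mu>) = (\<integral>\<^sup>+s. indicator {0..1} s * emeasure \<mu> {x\<in>space \<mu>. s < phi x} \<partial>lborel)"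
    by (rule layer_cake_01[OF phi p01]) unfold_locales
  also have "\<dots> \<le> (\<integral>\<^sup>+s. indicator {0..1} s * emeasure \<nu> {x\<in>space \<nu>. s < phi x} + indicator {0..1} s * ennreal (tv_dist \<mu> \<nu>) \<partial>lborel)"
    by (intro nn_integral_mono) (auto simp: distrib_left[symmetric] intro!: mult_left_mono le)
  also have "\<dots> = (\<integral>\<^sup>+s. indicator {0..1} s * emeasure \<nu> {x\<in>space \<nu>. s < phi x} \<partial>lborel)
       + (\<integral>\<^sup>+s. indicator {0..1::real} s * ennreal (tv_dist \<mu> \<nu>) \<partial>lborel)"
  proof -
    have m1: "(\<lambda>s::real. indicator {0..1} s * emeasure \<nu> {x\<in>space \<nu>. s < phi x}) \<in> borel_measurable lborel"
      by measurable
    have m2: "(\<lambda>s::real. indicator {0..1} s * ennreal (tv_dist \<mu> \<nu>)) \<in> borel_measurable lborel"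
      by measurable
    show ?thesis using nn_integral_add[OF m1 m2] by simp
  qed
  also have "(\<integral>\<^sup>+s. indicator {0..1} s * emeasure \<nu> {x\<in>space \<nu>. s < phi x} \<partial>lborel) = (\<integral>\<^sup>+x. ennreal (phi x) \<partial>\<nu>)"
    by (rule layer_cake_01[OF phin p01, symmetric]) unfold_locales
  also have "(\<integral>\<^sup>+s. indicator {0..1::real} s * ennreal (tv_dist \<mu> \<nu>) \<partial>lborel) = ennreal (tv_dist \<mu> \<nu>)"
    using nn_integral_cmult_indicator[of "{0..1::real}" lborel "ennreal (tv_dist \<mu> \<nu>)"]
    by (simp add: mult.commute)
  finally show ?thesis .
qed

section \<open>Independence tools\<close>

lemma (in prob_space) indep_freeze:
  assumes ind: "indep_var N1 Y N2 U" and g: "g \<in> borel_measurable (N1 \<Otimes>\<^sub>M N2)"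
  shows "(\<integral>\<^sup>+\<omega>. g (Y \<omega>, U \<omega>) \<partial>M) = (\<integral>\<^sup>+\<omega>. (\<integral>\<^sup>+\<omega>'. g (Y \<omega>, U \<omega>') \<partial>M) \<partial>M)"
proof -
  have Ym[measurable]: "Y \<in> measurable M N1" using indep_var_rv1[OF ind] .
  have Um[measurable]: "U \<in> measurable M N2" using indep_var_rv2[OF ind] .
  interpret pY: prob_space "distr M N1 Y" by (rule prob_space_distr) simp
  interpret pU: prob_space "distr M N2 U" by (rule prob_space_distr) simp
  have sets_eq: "sets (distr M N1 Y \<Otimes>\<^sub>M distr M N2 U) = sets (N1 \<Otimes>\<^sub>M N2)"
    by (intro sets_pair_measure_cong) auto
  have g': "g \<in> borel_measurable (distr M N1 Y \<Otimes>\<^sub>M distr M N2 U)"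
    using g by (simp cong: measurable_cong_sets add: sets_eq)
  define h where "h y = (\<integral>\<^sup>+u. g (y, u) \<partial>distr M N2 U)" for y
  have hm: "h \<in> borel_measurable N1"
  proof -
    have "h \<in> borel_measurable (distr M N1 Y)"
      unfolding h_def by (rule pU.borel_measurable_nn_integral_fst[OF g'])
    then show ?thesis by (simp cong: measurable_cong_sets)
  qed
  have "(\<integral>\<^sup>+\<omega>. g (Y \<omega>, U \<omega>) \<partial>M) = (\<integral>\<^sup>+p. g p \<partial>distr M (N1 \<Otimes>\<^sub>M N2) (\<lambda>\<omega>. (Y \<omega>, U \<omega>)))"
    by (rule nn_integral_distr[symmetric]) (use g in measurable)
  also have "distr M (N1 \<Otimes>\<^sub>M N2) (\<lambda>\<omega>. (Y \<omega>, U \<omega>)) = distr M N1 Y \<Otimes>\<^sub>M distr M N2 U"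
    using ind unfolding indep_var_distribution_eq by simp
  also have "(\<integral>\<^sup>+p. g p \<partial>(distr M N1 Y \<Otimes>\<^sub>M distr M N2 U)) = (\<integral>\<^sup>+y. h y \<partial>distr M N1 Y)"
    unfolding h_def by (rule pU.nn_integral_fst[OF g', symmetric])
  also have "\<dots> = (\<integral>\<^sup>+\<omega>. h (Y \<omega>) \<partial>M)"
    by (rule nn_integral_distr) (use hm in auto)
  also have "\<dots> = (\<integral>\<^sup>+\<omega>. (\<integral>\<^sup>+\<omega>'. g (Y \<omega>, U \<omega>') \<partial>M) \<partial>M)"
  proof (intro nn_integral_cong)
    fix \<omega> assume \<omega>: "\<omega> \<in> space M"
    have "(\<lambda>u. g (Y \<omega>, u)) \<in> borel_measurable N2"
      using g \<omega> Ym by (auto intro!: measurable_Pair2' simp: measurable_space)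
    then show "h (Y \<omega>) = (\<integral>\<^sup>+\<omega>'. g (Y \<omega>, U \<omega>') \<partial>M)"
      unfolding h_def by (subst nn_integral_distr) auto
  qed
  finally show ?thesis .
qed

lemma distr_borel_lborel: "distr M borel X = distr M lborel X"
  by (rule distr_cong) auto

lemma law_eq_finite:
  fixes W W' :: "nat \<Rightarrow> 'a \<Rightarrow> real^'d"
  assumes P: "prob_space M"
    and iW: "prob_space.indep_vars M (\<lambda>_. borel) W UNIV"
    and iW': "prob_space.indep_vars M (\<lambda>_. borel) W' UNIV"
    and dW: "\<And>t. distributed M lborel (W t) g"
    and dW': "\<And>t. distributed M lborel (W' t) g"
    and I: "finite I" "I \<noteq> {}"
    and G: "G \<in> measurable (PiM I (\<lambda>_. borel)) N"
  shows "distr M N (\<lambda>\<omega>. G (\<lambda>s\<in>I. W s \<omega>)) = distr M N (\<lambda>\<omega>. G (\<lambda>s\<in>I. W' s \<omega>))"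
proof -
  interpret prob_space M by (rule P)
  have Wm: "W t \<in> borel_measurable M" for t using distributed_measurable[OF dW[of t]] by simp
  have W'm: "W' t \<in> borel_measurable M" for t using distributed_measurable[OF dW'[of t]] by simp
  have marg: "distr M borel (W t) = distr M borel (W' t)" for t
    unfolding distr_borel_lborel distributed_distr_eq_density[OF dW] distributed_distr_eq_density[OF dW'] ..
  have "distr M (PiM I (\<lambda>_. borel)) (\<lambda>\<omega>. \<lambda>s\<in>I. W s \<omega>) = PiM I (\<lambda>i. distr M borel (W i))"
    using indep_vars_iff_distr_eq_PiM[where I=I and M'="\<lambda>_. borel" and X=W] I Wm indep_vars_subset[OF iW] by auto
  also have "\<dots> = PiM I (\<lambda>i. distr M borel (W' i))" by (simp add: marg)
  also have "\<dots> = distr M (PiM I (\<lambda>_. borel)) (\<lambda>\<omega>. \<lambda>s\<in>I. W' s \<omega>)"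
    using indep_vars_iff_distr_eq_PiM[where I=I and M'="\<lambda>_. borel" and X=W'] I W'm indep_vars_subset[OF iW'] by auto
  finally have eq: "distr M (PiM I (\<lambda>_. borel)) (\<lambda>\<omega>. \<lambda>s\<in>I. W s \<omega>) = distr M (PiM I (\<lambda>_. borel)) (\<lambda>\<omega>. \<lambda>s\<in>I. W' s \<omega>)" .
  have m1: "(\<lambda>\<omega>. \<lambda>s\<in>I. W s \<omega>) \<in> measurable M (PiM I (\<lambda>_. borel))"
    using Wm by (intro measurable_restrict) auto
  have m2: "(\<lambda>\<omega>. \<lambda>s\<in>I. W' s \<omega>) \<in> measurable M (PiM I (\<lambda>_. borel))"
    using W'm by (intro measurable_restrict) auto
  have "distr M N (\<lambda>\<omega>. G (\<lambda>s\<in>I. W s \<omega>)) = distr (distr M (PiM I (\<lambda>_. borel)) (\<lambda>\<omega>. \<lambda>s\<in>I. W s \<omega>)) N G"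
    using distr_distr[OF G m1] by (simp add: comp_def)
  also have "\<dots> = distr (distr M (PiM I (\<lambda>_. borel)) (\<lambda>\<omega>. \<lambda>s\<in>I. W' s \<omega>)) N G" by (simp only: eq)
  also have "\<dots> = distr M N (\<lambda>\<omega>. G (\<lambda>s\<in>I. W' s \<omega>))"
    using distr_distr[OF G m2] by (simp add: comp_def)
  finally show ?thesis .
qed

lemma tv_coupling:
  assumes P: "prob_space M" and Z1: "Z1 \<in> measurable M N" and Z2: "Z2 \<in> measurable M N"
    and B: "B \<in> sets M" and eq: "\<And>\<omega>. \<omega> \<in> space M \<Longrightarrow> \<omega> \<notin> B \<Longrightarrow> Z1 \<omega> = Z2 \<omega>"
  shows "tv_dist (distr M N Z1) (distr M N Z2) \<le> measure M B"
proof (rule tv_least)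
  interpret prob_space M by (rule P)
  fix A assume "A \<in> sets (distr M N Z1)"
  then have A: "A \<in> sets N" by simp
  define E1 where "E1 = Z1 -` A \<inter> space M"
  define E2 where "E2 = Z2 -` A \<inter> space M"
  have E: "E1 \<in> sets M" "E2 \<in> sets M" using A Z1 Z2 by (auto simp: E1_def E2_def)
  have s1: "E1 \<subseteq> E2 \<union> B" "E2 \<subseteq> E1 \<union> B" using eq sets.sets_into_space[OF B] by (auto simp: E1_def E2_def)
  have "measure M E1 \<le> measure M (E2 \<union> B)" using s1 E B by (intro finite_measure_mono) auto
  also have "\<dots> \<le> measure M E2 + measure M B" using E B by (intro measure_Un_le) auto
  finally have a: "measure M E1 \<le> measure M E2 + measure M B" .
  have "measure M E2 \<le> measure M (E1 \<union> B)" using s1 E B by (intro finite_measure_mono) auto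
  also have "\<dots> \<le> measure M E1 + measure M B" using E B by (intro measure_Un_le) auto
  finally have b: "measure M E2 \<le> measure M E1 + measure M B" .
  have "measure (distr M N Z1) A = measure M E1" unfolding E1_def using A Z1 by (simp add: measure_distr)
  moreover have "measure (distr M N Z2) A = measure M E2" unfolding E2_def using A Z2 by (simp add: measure_distr)
  ultimately show "\<bar>measure (distr M N Z1) A - measure (distr M N Z2) A\<bar> \<le> measure M B"
    using a b by linarith
qed

section \<open>Markov structure\<close>

definition Pfun :: "(real^'d \<Rightarrow> real^'d) \<Rightarrow> real^'d^'d \<Rightarrow> (nat \<Rightarrow> real^'d) \<Rightarrow> nat \<Rightarrow> real^'d" where
  "Pfun f H y t = chain_from f H (H *v y 0) (\<lambda>s. y (Suc s)) t"

lemma Pfun_restrict: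
  assumes "t \<le> j"
  shows "Pfun f H (\<lambda>s\<in>{..j}. V s \<omega>) t = proc f H V t \<omega>"
  unfolding Pfun_def proc_def using assms by (auto intro!: chain_from_cong)

lemma proc_split:
  assumes "j \<le> t"
  shows "proc f H V t \<omega> = chain_from f H (proc f H V j \<omega>) (\<lambda>s. V (j + Suc s) \<omega>) (t - j)"
proof -
  have "proc f H V t \<omega> = proc f H V (j + (t - j)) \<omega>" using assms by simp
  also have "\<dots> = chain_from f H (proc f H V j \<omega>) (\<lambda>s. V (Suc (j + s)) \<omega>) (t - j)"
    unfolding proc_def by (rule chain_from_add)
  finally show ?thesis by simp
qed

lemma Pfun_meas:
  assumes f: "f \<in> borel_measurable borel" and y: "\<And>s. s \<le> t \<Longrightarrow> (\<lambda>n. Y n s) \<in> borel_measurable N"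
  shows "(\<lambda>n. Pfun f H (Y n) t) \<in> borel_measurable N"
  unfolding Pfun_def
proof (rule chain_meas[OF f])
  show "(\<lambda>n. H *v Y n 0) \<in> borel_measurable N"
    using measurable_compose[OF y[of 0] mult_vec_borel] by simp
  show "(\<lambda>n. Y n (Suc s)) \<in> borel_measurable N" if "s < t" for s
    using y[of "Suc s"] that by simp
qed

lemma proc_meas:
  assumes f: "f \<in> borel_measurable borel" and V: "\<And>s. V s \<in> borel_measurable M"
  shows "proc f H V t \<in> borel_measurable M"
proof -
  have "(\<lambda>\<omega>. Pfun f H (\<lambda>s. V s \<omega>) t) \<in> borel_measurable M"
    by (rule Pfun_meas[OF f]) (use V in auto)
  then show ?thesis unfolding Pfun_def proc_def by simp
qed

lemma cond_bound:
  fixes V :: "nat \<Rightarrow> 'a \<Rightarrow> real^'d"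
  assumes P: "prob_space M" and f: "f \<in> borel_measurable borel"
    and indV: "prob_space.indep_vars M (\<lambda>_. borel) V UNIV"
    and ij: "i < j" "j < T"
    and B: "B \<in> sets (PiM {..i} (\<lambda>_. borel))" and C: "C \<in> sets (PiM {j..<T} (\<lambda>_. borel))"
    and E0: "0 \<le> E"
    and E: "AE \<omega> in M. tv_dist (distr M borel (\<lambda>\<omega>'. chain_from f H (proc f H V i \<omega>) (\<lambda>s. V (i + Suc s) \<omega>') (j - i)))
                               (distr M borel (proc f H V j)) \<le> E"
  defines "A \<equiv> {\<omega>\<in>space M. (\<lambda>t\<in>{..i}. proc f H V t \<omega>) \<in> B}"
    and "FC \<equiv> {\<omega>\<in>space M. (\<lambda>t\<in>{j..<T}. proc f H V t \<omega>) \<in> C}"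
  shows "\<bar>measure M (A \<inter> FC) - measure M A * measure M FC\<bar> \<le> measure M A * E"
proof -
  interpret prob_space M by (rule P)
  have Vm[measurable]: "V s \<in> borel_measurable M" for s
    using indV unfolding indep_vars_def by auto
  have procm[measurable]: "proc f H V t \<in> borel_measurable M" for t
    by (rule proc_meas[OF f Vm])
  define k where "k = j - i"
  have jk: "j = i + k" using ij by (simp add: k_def)
  define Gj where "Gj y \<omega>' = (\<lambda>t\<in>{j..<T}. chain_from f H y (\<lambda>s. V (j + Suc s) \<omega>') (t - j))" for y \<omega>'
  define psi where "psi y = (\<integral>\<^sup>+\<omega>'. indicator C (Gj y \<omega>') \<partial>M)" for y
  have Gjm: "(\<lambda>p. Gj (fst p) (snd p)) \<in> measurable (borel \<Otimes>\<^sub>M M) (PiM {j..<T} (\<lambda>_. borel))"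
    unfolding Gj_def
  proof (rule measurable_restrict)
    fix t assume "t \<in> {j..<T}"
    show "(\<lambda>p. chain_from f H (fst p) (\<lambda>s. V (j + Suc s) (snd p)) (t - j)) \<in> borel_measurable (borel \<Otimes>\<^sub>M M)"
      by (rule chain_meas[OF f]) auto
  qed
  have psim[measurable]: "psi \<in> borel_measurable borel"
  proof -
    have "(\<lambda>p. indicator C (Gj (fst p) (snd p)) :: ennreal) \<in> borel_measurable (borel \<Otimes>\<^sub>M M)"
      using measurable_compose[OF Gjm borel_measurable_indicator[OF C]] by (simp add: comp_def)
    then show ?thesis unfolding psi_def
      by (intro borel_measurable_nn_integral) (simp add: case_prod_beta')
  qed
  have psi1: "psi y \<le> 1" for y
  proof -
    have "psi y \<le> (\<integral>\<^sup>+\<omega>'. 1 \<partial>M)" unfolding psi_def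
      by (intro nn_integral_mono) (auto split: split_indicator)
    then show ?thesis by (simp add: emeasure_space_1)
  qed
  have GjmC: "(\<lambda>\<omega>'. indicator C (Gj x \<omega>') :: ennreal) \<in> borel_measurable M" for x
  proof -
    have "(\<lambda>\<omega>'. Gj x \<omega>') \<in> measurable M (PiM {j..<T} (\<lambda>_. borel))"
      using measurable_compose[OF measurable_Pair[OF measurable_const[of x] measurable_ident] Gjm]
      by (simp add: comp_def id_def)
    then show ?thesis using C by measurable
  qed
  define Aof where "Aof B' = {\<omega>\<in>space M. (\<lambda>t\<in>{..i}. proc f H V t \<omega>) \<in> B'}" for B'
  have Aof_m: "Aof B' \<in> sets M" if "B' \<in> sets (PiM {..i} (\<lambda>_. borel))" for B'
  proof -
    have "(\<lambda>\<omega>. \<lambda>t\<in>{..i}. proc f H V t \<omega>) \<in> measurable M (PiM {..i} (\<lambda>_. borel))"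
      by (intro measurable_restrict) auto
    then show ?thesis unfolding Aof_def using that by measurable
  qed
  have FC_m: "FC \<in> sets M"
  proof -
    have "(\<lambda>\<omega>. \<lambda>t\<in>{j..<T}. proc f H V t \<omega>) \<in> measurable M (PiM {j..<T} (\<lambda>_. borel))"
      by (intro measurable_restrict) auto
    then show ?thesis unfolding FC_def using C by measurable
  qed
  have claim1: "emeasure M (Aof B' \<inter> FC) = (\<integral>\<^sup>+\<omega>. indicator (Aof B') \<omega> * psi (proc f H V j \<omega>) \<partial>M)"
    if B': "B' \<in> sets (PiM {..i} (\<lambda>_. borel))" for B'
  proof -
    define Y where "Y \<omega> = (\<lambda>s\<in>{..j}. V s \<omega>)" for \<omega>
    define U where "U \<omega> = (\<lambda>s\<in>{Suc j..}. V s \<omega>)" for \<omega>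
    have ind: "indep_var (PiM {..j} (\<lambda>_. borel)) Y (PiM {Suc j..} (\<lambda>_. borel)) U"
      unfolding Y_def U_def by (rule indep_var_restrict[OF indV]) auto
    define g where "g p = (indicator B' (\<lambda>t\<in>{..i}. Pfun f H (fst p) t) *
        indicator C (\<lambda>t\<in>{j..<T}. chain_from f H (Pfun f H (fst p) j) (\<lambda>s. snd p (j + Suc s)) (t - j)) :: ennreal)" for p
    have gm: "(g :: _ \<Rightarrow> ennreal) \<in> borel_measurable (PiM {..j} (\<lambda>_. borel) \<Otimes>\<^sub>M PiM {Suc j..} (\<lambda>_. borel))"
    proof -
      let ?N = "PiM {..j} (\<lambda>_. borel) \<Otimes>\<^sub>M PiM {Suc j..} (\<lambda>_. borel :: (real^'d) measure)"
      have c1: "(\<lambda>p. fst p s) \<in> borel_measurable ?N" if "s \<le> j" for s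
        using that measurable_compose[OF measurable_fst measurable_component_singleton[of s "{..j}"]] by auto
      have c2: "(\<lambda>p. snd p s) \<in> borel_measurable ?N" if "Suc j \<le> s" for s
        using that measurable_compose[OF measurable_snd measurable_component_singleton[of s "{Suc j..}"]] by auto
      have m1: "(\<lambda>p. \<lambda>t\<in>{..i}. Pfun f H (fst p) t) \<in> measurable ?N (PiM {..i} (\<lambda>_. borel))"
        using ij by (intro measurable_restrict Pfun_meas[OF f] c1) auto
      have m2: "(\<lambda>p. \<lambda>t\<in>{j..<T}. chain_from f H (Pfun f H (fst p) j) (\<lambda>s. snd p (j + Suc s)) (t - j))
          \<in> measurable ?N (PiM {j..<T} (\<lambda>_. borel))"
        by (intro measurable_restrict chain_meas[OF f] Pfun_meas[OF f] c1 c2) auto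
      show ?thesis unfolding g_def using m1 m2 B' C by measurable
    qed
    have lhs: "g (Y \<omega>, U \<omega>) = indicator (Aof B' \<inter> FC) \<omega>" if \<omega>: "\<omega> \<in> space M" for \<omega>
    proof -
      have e1: "(\<lambda>t\<in>{..i}. Pfun f H (Y \<omega>) t) = (\<lambda>t\<in>{..i}. proc f H V t \<omega>)"
        unfolding Y_def using ij by (intro restrict_ext Pfun_restrict) auto
      have e2: "(\<lambda>t\<in>{j..<T}. chain_from f H (Pfun f H (Y \<omega>) j) (\<lambda>s. U \<omega> (j + Suc s)) (t - j))
          = (\<lambda>t\<in>{j..<T}. proc f H V t \<omega>)"
      proof (intro restrict_ext)
        fix t assume t: "t \<in> {j..<T}"
        have "Pfun f H (Y \<omega>) j = proc f H V j \<omega>" unfolding Y_def by (rule Pfun_restrict) simp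
        moreover have "(\<lambda>s. U \<omega> (j + Suc s)) = (\<lambda>s. V (j + Suc s) \<omega>)" by (auto simp: U_def)
        ultimately show "chain_from f H (Pfun f H (Y \<omega>) j) (\<lambda>s. U \<omega> (j + Suc s)) (t - j) = proc f H V t \<omega>"
          using proc_split[of j t f H V \<omega>] t by simp
      qed
      show ?thesis unfolding g_def fst_conv snd_conv e1 e2 using \<omega>
        by (simp add: Aof_def FC_def split: split_indicator)
    qed
    have rhs: "(\<integral>\<^sup>+\<omega>'. g (Y \<omega>, U \<omega>') \<partial>M) = indicator (Aof B') \<omega> * psi (proc f H V j \<omega>)"
      if \<omega>: "\<omega> \<in> space M" for \<omega>
    proof -
      have e1: "(\<lambda>t\<in>{..i}. Pfun f H (Y \<omega>) t) = (\<lambda>t\<in>{..i}. proc f H V t \<omega>)"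
        unfolding Y_def using ij by (intro restrict_ext Pfun_restrict) auto
      have pj: "Pfun f H (Y \<omega>) j = proc f H V j \<omega>" unfolding Y_def by (rule Pfun_restrict) simp
      have e2: "(\<lambda>t\<in>{j..<T}. chain_from f H (Pfun f H (Y \<omega>) j) (\<lambda>s. U \<omega>' (j + Suc s)) (t - j))
          = Gj (proc f H V j \<omega>) \<omega>'" for \<omega>'
      proof -
        have "(\<lambda>s. U \<omega>' (j + Suc s)) = (\<lambda>s. V (j + Suc s) \<omega>')" by (auto simp: U_def)
        then show ?thesis unfolding Gj_def pj by simp
      qed
      have "(\<integral>\<^sup>+\<omega>'. g (Y \<omega>, U \<omega>') \<partial>M) = (\<integral>\<^sup>+\<omega>'. indicator (Aof B') \<omega> * indicator C (Gj (proc f H V j \<omega>) \<omega>') \<partial>M)"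
      proof -
        have "indicator B' (\<lambda>t\<in>{..i}. proc f H V t \<omega>) = (indicator (Aof B') \<omega> :: ennreal)"
          using \<omega> by (simp add: Aof_def split: split_indicator)
        then show ?thesis unfolding g_def fst_conv snd_conv e1 e2 by simp
      qed
      also have "\<dots> = indicator (Aof B') \<omega> * psi (proc f H V j \<omega>)"
        unfolding psi_def by (rule nn_integral_cmult) (rule GjmC)
      finally show ?thesis .
    qed
    have "emeasure M (Aof B' \<inter> FC) = (\<integral>\<^sup>+\<omega>. indicator (Aof B' \<inter> FC) \<omega> \<partial>M)"
      using Aof_m[OF B'] FC_m by simp
    also have "\<dots> = (\<integral>\<^sup>+\<omega>. g (Y \<omega>, U \<omega>) \<partial>M)"
      by (intro nn_integral_cong) (simp add: lhs)
    also have "\<dots> = (\<integral>\<^sup>+\<omega>. (\<integral>\<^sup>+\<omega>'. g (Y \<omega>, U \<omega>') \<partial>M) \<partial>M)"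
      by (rule indep_freeze[OF ind gm])
    also have "\<dots> = (\<integral>\<^sup>+\<omega>. indicator (Aof B') \<omega> * psi (proc f H V j \<omega>) \<partial>M)"
      by (intro nn_integral_cong) (simp add: rhs)
    finally show ?thesis .
  qed
  define kb where "kb x = distr M borel (\<lambda>\<omega>'. chain_from f H x (\<lambda>s. V (i + Suc s) \<omega>') k)" for x
  have kbm: "(\<lambda>\<omega>'. chain_from f H x (\<lambda>s. V (i + Suc s) \<omega>') k) \<in> borel_measurable M" for x
    by (rule chain_meas[OF f]) auto
  have claim2: "(\<integral>\<^sup>+\<omega>. indicator (Aof B') \<omega> * psi (proc f H V j \<omega>) \<partial>M)
      = (\<integral>\<^sup>+\<omega>. indicator (Aof B') \<omega> * (\<integral>\<^sup>+y. psi y \<partial>kb (proc f H V i \<omega>)) \<partial>M)"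
    if B': "B' \<in> sets (PiM {..i} (\<lambda>_. borel))" for B'
  proof -
    define Y where "Y \<omega> = (\<lambda>s\<in>{..i}. V s \<omega>)" for \<omega>
    define U where "U \<omega> = (\<lambda>s\<in>{Suc i..}. V s \<omega>)" for \<omega>
    have ind: "indep_var (PiM {..i} (\<lambda>_. borel)) Y (PiM {Suc i..} (\<lambda>_. borel)) U"
      unfolding Y_def U_def by (rule indep_var_restrict[OF indV]) auto
    define g where "g p = (indicator B' (\<lambda>t\<in>{..i}. Pfun f H (fst p) t) *
        psi (chain_from f H (Pfun f H (fst p) i) (\<lambda>s. snd p (i + Suc s)) k) :: ennreal)" for p
    have gm: "g \<in> borel_measurable (PiM {..i} (\<lambda>_. borel) \<Otimes>\<^sub>M PiM {Suc i..} (\<lambda>_. borel))"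
    proof -
      let ?N = "PiM {..i} (\<lambda>_. borel) \<Otimes>\<^sub>M PiM {Suc i..} (\<lambda>_. borel :: (real^'d) measure)"
      have c1: "(\<lambda>p. fst p s) \<in> borel_measurable ?N" if "s \<le> i" for s
        using that measurable_compose[OF measurable_fst measurable_component_singleton[of s "{..i}"]] by auto
      have c2: "(\<lambda>p. snd p s) \<in> borel_measurable ?N" if "Suc i \<le> s" for s
        using that measurable_compose[OF measurable_snd measurable_component_singleton[of s "{Suc i..}"]] by auto
      have m1: "(\<lambda>p. \<lambda>t\<in>{..i}. Pfun f H (fst p) t) \<in> measurable ?N (PiM {..i} (\<lambda>_. borel))"
        by (intro measurable_restrict Pfun_meas[OF f] c1) auto
      have m2: "(\<lambda>p. chain_from f H (Pfun f H (fst p) i) (\<lambda>s. snd p (i + Suc s)) k) \<in> borel_measurable ?N"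
        by (intro chain_meas[OF f] Pfun_meas[OF f] c1 c2) auto
      have m3: "(\<lambda>p. psi (chain_from f H (Pfun f H (fst p) i) (\<lambda>s. snd p (i + Suc s)) k)) \<in> borel_measurable ?N"
        using measurable_compose[OF m2 psim] by (simp add: comp_def)
      show ?thesis unfolding g_def using m1 m3 B' by measurable
    qed
    have e1: "(\<lambda>t\<in>{..i}. Pfun f H (Y \<omega>) t) = (\<lambda>t\<in>{..i}. proc f H V t \<omega>)" for \<omega>
      unfolding Y_def by (intro restrict_ext Pfun_restrict) auto
    have pi: "Pfun f H (Y \<omega>) i = proc f H V i \<omega>" for \<omega> unfolding Y_def by (rule Pfun_restrict) simp
    have Ush: "(\<lambda>s. U \<omega> (i + Suc s)) = (\<lambda>s. V (i + Suc s) \<omega>)" for \<omega> by (auto simp: U_def)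
    have ind_eq: "indicator B' (\<lambda>t\<in>{..i}. proc f H V t \<omega>) = (indicator (Aof B') \<omega> :: ennreal)"
      if "\<omega> \<in> space M" for \<omega>
      using that by (simp add: Aof_def split: split_indicator)
    have lhs: "g (Y \<omega>, U \<omega>) = indicator (Aof B') \<omega> * psi (proc f H V j \<omega>)" if \<omega>: "\<omega> \<in> space M" for \<omega>
    proof -
      have "proc f H V j \<omega> = chain_from f H (proc f H V i \<omega>) (\<lambda>s. V (i + Suc s) \<omega>) k"
        unfolding k_def using ij by (intro proc_split) simp
      then show ?thesis unfolding g_def fst_conv snd_conv e1 pi Ush ind_eq[OF \<omega>] by simp
    qed
    have rhs: "(\<integral>\<^sup>+\<omega>'. g (Y \<omega>, U \<omega>') \<partial>M) = indicator (Aof B') \<omega> * (\<integral>\<^sup>+y. psi y \<partial>kb (proc f H V i \<omega>))"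
      if \<omega>: "\<omega> \<in> space M" for \<omega>
    proof -
      have "(\<integral>\<^sup>+\<omega>'. g (Y \<omega>, U \<omega>') \<partial>M)
          = (\<integral>\<^sup>+\<omega>'. indicator (Aof B') \<omega> * psi (chain_from f H (proc f H V i \<omega>) (\<lambda>s. V (i + Suc s) \<omega>') k) \<partial>M)"
        unfolding g_def fst_conv snd_conv e1 pi Ush ind_eq[OF \<omega>] ..
      also have "\<dots> = indicator (Aof B') \<omega> * (\<integral>\<^sup>+\<omega>'. psi (chain_from f H (proc f H V i \<omega>) (\<lambda>s. V (i + Suc s) \<omega>') k) \<partial>M)"
        by (rule nn_integral_cmult) (use kbm in measurable)
      also have "(\<integral>\<^sup>+\<omega>'. psi (chain_from f H (proc f H V i \<omega>) (\<lambda>s. V (i + Suc s) \<omega>') k) \<partial>M)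
          = (\<integral>\<^sup>+y. psi y \<partial>kb (proc f H V i \<omega>))"
        unfolding kb_def by (rule nn_integral_distr[symmetric]) (use kbm in auto)
      finally show ?thesis .
    qed
    have "(\<integral>\<^sup>+\<omega>. indicator (Aof B') \<omega> * psi (proc f H V j \<omega>) \<partial>M) = (\<integral>\<^sup>+\<omega>. g (Y \<omega>, U \<omega>) \<partial>M)"
      by (intro nn_integral_cong) (simp add: lhs)
    also have "\<dots> = (\<integral>\<^sup>+\<omega>. (\<integral>\<^sup>+\<omega>'. g (Y \<omega>, U \<omega>') \<partial>M) \<partial>M)"
      by (rule indep_freeze[OF ind gm])
    also have "\<dots> = (\<integral>\<^sup>+\<omega>. indicator (Aof B') \<omega> * (\<integral>\<^sup>+y. psi y \<partial>kb (proc f H V i \<omega>)) \<partial>M)"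
      by (intro nn_integral_cong) (simp add: rhs)
    finally show ?thesis .
  qed
  define pf where "pf x = (\<integral>\<^sup>+\<omega>'. psi (chain_from f H x (\<lambda>s. V (i + Suc s) \<omega>') k) \<partial>M)" for x
  have pf_eq: "(\<integral>\<^sup>+y. psi y \<partial>kb x) = pf x" for x
    unfolding kb_def pf_def by (rule nn_integral_distr) (use kbm in auto)
  have pfm: "pf \<in> borel_measurable borel"
  proof -
    have "(\<lambda>p. chain_from f H (fst p) (\<lambda>s. V (i + Suc s) (snd p)) k) \<in> borel_measurable (borel \<Otimes>\<^sub>M M)"
      by (rule chain_meas[OF f]) auto
    then have "(\<lambda>p. psi (chain_from f H (fst p) (\<lambda>s. V (i + Suc s) (snd p)) k)) \<in> borel_measurable (borel \<Otimes>\<^sub>M M)"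
      using psim by (simp add: measurable_compose[where f="\<lambda>p. chain_from f H (fst p) (\<lambda>s. V (i + Suc s) (snd p)) k"])
    then show ?thesis unfolding pf_def
      by (intro borel_measurable_nn_integral) (simp add: case_prod_beta')
  qed
  define Lj where "Lj = distr M borel (proc f H V j)"
  define q where "q = (\<integral>\<^sup>+y. psi y \<partial>Lj)"
  have full: "space (PiM {..i} (\<lambda>_. borel :: (real^'d) measure)) \<in> sets (PiM {..i} (\<lambda>_. borel))" by simp
  have Aof_full: "Aof (space (PiM {..i} (\<lambda>_. borel :: (real^'d) measure))) = space M"
    unfolding Aof_def by (auto simp: space_PiM)
  have qFC: "q = emeasure M FC"
  proof -
    have "q = (\<integral>\<^sup>+\<omega>. psi (proc f H V j \<omega>) \<partial>M)"
      unfolding q_def Lj_def by (rule nn_integral_distr) auto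
    also have "\<dots> = (\<integral>\<^sup>+\<omega>. indicator (space M) \<omega> * psi (proc f H V j \<omega>) \<partial>M)"
      by (intro nn_integral_cong) simp
    also have "\<dots> = emeasure M (space M \<inter> FC)"
      using claim1[OF full] unfolding Aof_full by simp
    finally show ?thesis using FC_m sets.sets_into_space by (simp add: Int_absorb1)
  qed
  define phi where "phi y = enn2real (psi y)" for y
  have psi_phi: "psi y = ennreal (phi y)" for y
  proof -
    have "psi y \<noteq> top" using psi1[of y] by (metis ennreal_one_neq_top top_unique)
    then show ?thesis unfolding phi_def by (metis ennreal_enn2real less_top)
  qed
  have phi01: "0 \<le> phi y" "phi y \<le> 1" for y
  proof -
    show "0 \<le> phi y" by (simp add: phi_def)
    show "phi y \<le> 1" unfolding phi_def using enn2real_mono[OF psi1[of y]] by simp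
  qed
  have phim: "phi \<in> borel_measurable borel" unfolding phi_def using psim by measurable
  have tvb: "pf x \<le> q + ennreal (tv_dist (kb x) Lj) \<and> q \<le> pf x + ennreal (tv_dist (kb x) Lj)" for x
  proof -
    have P1: "prob_space (kb x)" unfolding kb_def by (rule prob_space_distr) (use kbm in auto)
    have P2: "prob_space Lj" unfolding Lj_def by (rule prob_space_distr) auto
    have S: "sets (kb x) = sets Lj" by (simp add: kb_def Lj_def)
    have a: "(\<integral>\<^sup>+y. ennreal (phi y) \<partial>kb x) \<le> (\<integral>\<^sup>+y. ennreal (phi y) \<partial>Lj) + ennreal (tv_dist (kb x) Lj)"
      by (rule tv_integral[OF P1 P2 S _ phi01]) (use phim in \<open>simp add: kb_def\<close>)
    have b: "(\<integral>\<^sup>+y. ennreal (phi y) \<partial>Lj) \<le> (\<integral>\<^sup>+y. ennreal (phi y) \<partial>kb x) + ennreal (tv_dist Lj (kb x))"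
      by (rule tv_integral[OF P2 P1 S[symmetric] _ phi01]) (use phim in \<open>simp add: Lj_def\<close>)
    have c: "tv_dist Lj (kb x) = tv_dist (kb x) Lj" by (rule tv_sym) (simp add: S)
    show ?thesis using a b c unfolding q_def pf_eq[symmetric] psi_phi by simp
  qed
  have AEb: "AE \<omega> in M. pf (proc f H V i \<omega>) \<le> q + ennreal E \<and> q \<le> pf (proc f H V i \<omega>) + ennreal E"
    using E
  proof eventually_elim
    case (elim \<omega>)
    then have "ennreal (tv_dist (kb (proc f H V i \<omega>)) Lj) \<le> ennreal E"
      unfolding kb_def Lj_def k_def by (intro ennreal_leI)
    then show ?case using tvb[of "proc f H V i \<omega>"]
      by (meson add_left_mono order_trans)
  qed
  have AB: "emeasure M (A \<inter> FC) = (\<integral>\<^sup>+\<omega>. indicator A \<omega> * pf (proc f H V i \<omega>) \<partial>M)"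
    using claim1[OF B] claim2[OF B] unfolding pf_eq by (simp add: A_def Aof_def)
  have Am: "A \<in> sets M" using Aof_m[OF B] by (simp add: A_def Aof_def)
  have i1: "emeasure M (A \<inter> FC) \<le> (q + ennreal E) * emeasure M A"
  proof -
    have "emeasure M (A \<inter> FC) \<le> (\<integral>\<^sup>+\<omega>. (q + ennreal E) * indicator A \<omega> \<partial>M)"
      unfolding AB using AEb by (intro nn_integral_mono_AE) (auto elim!: eventually_mono intro!: mult_right_mono split: split_indicator)
    also have "\<dots> = (q + ennreal E) * emeasure M A" using Am by (rule nn_integral_cmult_indicator)
    finally show ?thesis .
  qed
  have i2: "q * emeasure M A \<le> emeasure M (A \<inter> FC) + ennreal E * emeasure M A"
  proof -
    have "q * emeasure M A = (\<integral>\<^sup>+\<omega>. q * indicator A \<omega> \<partial>M)" using Am by (rule nn_integral_cmult_indicator[symmetric])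
    also have "\<dots> \<le> (\<integral>\<^sup>+\<omega>. indicator A \<omega> * pf (proc f H V i \<omega>) + ennreal E * indicator A \<omega> \<partial>M)"
      by (rule nn_integral_mono_AE) (use AEb in \<open>eventually_elim, auto split: split_indicator\<close>)
    also have "\<dots> = (\<integral>\<^sup>+\<omega>. indicator A \<omega> * pf (proc f H V i \<omega>) \<partial>M) + (\<integral>\<^sup>+\<omega>. ennreal E * indicator A \<omega> \<partial>M)"
    proof (rule nn_integral_add)
      show "(\<lambda>\<omega>. indicator A \<omega> * pf (proc f H V i \<omega>)) \<in> borel_measurable M"
        using Am measurable_compose[OF procm pfm] by measurable
    qed (use Am in measurable)
    also have "\<dots> = emeasure M (A \<inter> FC) + ennreal E * emeasure M A"
      using Am by (simp add: AB nn_integral_cmult_indicator)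
    finally show ?thesis .
  qed
  have r1: "measure M (A \<inter> FC) \<le> (measure M FC + E) * measure M A"
  proof -
    have "ennreal (measure M (A \<inter> FC)) \<le> ennreal ((measure M FC + E) * measure M A)"
      using i1 unfolding qFC emeasure_eq_measure using E0 by (simp add: ennreal_mult ennreal_plus[symmetric] del: ennreal_plus)
    then show ?thesis using E0 by (subst (asm) ennreal_le_iff) auto
  qed
  have r2: "measure M FC * measure M A \<le> measure M (A \<inter> FC) + E * measure M A"
  proof -
    have e: "ennreal (measure M (A \<inter> FC) + E * measure M A) = ennreal (measure M (A \<inter> FC)) + ennreal E * ennreal (measure M A)"
      using E0 by (simp add: ennreal_plus ennreal_mult)
    have "ennreal (measure M FC * measure M A) \<le> ennreal (measure M (A \<inter> FC) + E * measure M A)"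
      using i2 unfolding qFC emeasure_eq_measure e by (simp add: ennreal_mult)
    then show ?thesis using E0 by (subst (asm) ennreal_le_iff) auto
  qed
  show ?thesis using r1 r2 by (simp add: abs_le_iff algebra_simps)
qed


lemma gamma_entry_bound:
  fixes V :: "nat \<Rightarrow> 'a \<Rightarrow> real^'d"
  assumes P: "prob_space M" and f: "f \<in> borel_measurable borel"
    and indV: "prob_space.indep_vars M (\<lambda>_. borel) V UNIV"
    and ij: "i < j" "j < T"
    and E0: "0 \<le> E"
    and E: "AE \<omega> in M. tv_dist (distr M borel (\<lambda>\<omega>'. chain_from f H (proc f H V i \<omega>) (\<lambda>s. V (i + Suc s) \<omega>') (j - i)))
                               (distr M borel (proc f H V j)) \<le> E"
  shows "0 \<le> gamma_dep T (distr M (path_space T) (\<lambda>\<omega>. \<lambda>t\<in>{..<T}. proc f H V t \<omega>)) i j \<and>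
         gamma_dep T (distr M (path_space T) (\<lambda>\<omega>. \<lambda>t\<in>{..<T}. proc f H V t \<omega>)) i j \<le> sqrt (2 * E)"
proof -
  interpret prob_space M by (rule P)
  have Vm[measurable]: "V s \<in> borel_measurable M" for s
    using indV unfolding indep_vars_def by auto
  have procm[measurable]: "proc f H V t \<in> borel_measurable M" for t
    by (rule proc_meas[OF f Vm])
  define X where "X \<omega> = (\<lambda>t\<in>{..<T}. proc f H V t \<omega>)" for \<omega>
  have Xm: "X \<in> measurable M (path_space T)" unfolding X_def by (intro measurable_restrict) auto
  define PX where "PX = distr M (path_space T) X"
  interpret px: prob_space PX unfolding PX_def by (rule prob_space_distr[OF Xm])
  have spPX: "space PX = space (path_space T)" by (simp add: PX_def)
  have setsPX: "sets PX = sets (path_space T)" by (simp add: PX_def)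
  have Rm: "(\<lambda>z. restrict z {j..<T}) \<in> measurable (path_space T) (PiM {j..<T} (\<lambda>_. borel))"
    by (intro measurable_restrict) (auto intro!: measurable_component_singleton)
  define S where "S = {A \<in> past_events T i. measure PX A > 0}"
  have Sne: "space (path_space T) \<in> S"
  proof -
    have "space (path_space T) \<in> past_events T i"
      unfolding past_events_def
      by (rule CollectI, rule exI[of _ "space (PiM {..i} (\<lambda>_. borel))"])
         (auto simp: space_PiM)
    moreover have "measure PX (space (path_space T)) > 0"
      using px.prob_space spPX by simp
    ultimately show ?thesis unfolding S_def by blast
  qed
  have each: "tv_dist (future_law T j (uniform_measure PX A)) (future_law T j PX) \<le> E \<and>
      0 \<le> tv_dist (future_law T j (uniform_measure PX A)) (future_law T j PX)" if AS: "A \<in> S" for A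
  proof -
    from AS obtain B where B: "B \<in> sets (PiM {..i} (\<lambda>_. borel))"
      and Adef: "A = (\<lambda>z. restrict z {..i}) -` B \<inter> space (path_space T)"
      and Apos: "measure PX A > 0"
      unfolding S_def past_events_def by auto
    have Ams: "A \<in> sets PX"
    proof -
      have "(\<lambda>z. restrict z {..i}) \<in> measurable (path_space T) (PiM {..i} (\<lambda>_. borel))"
        using ij by (intro measurable_restrict) (auto intro!: measurable_component_singleton)
      then show ?thesis unfolding Adef setsPX using B by (rule measurable_sets)
    qed
    define A' where "A' = {\<omega>\<in>space M. (\<lambda>t\<in>{..i}. proc f H V t \<omega>) \<in> B}"
    have XA: "X -` A \<inter> space M = A'"
    proof -
      have "restrict (X \<omega>) {..i} = (\<lambda>t\<in>{..i}. proc f H V t \<omega>)" for \<omega>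
        using ij by (auto simp: X_def fun_eq_iff)
      moreover have "X \<omega> \<in> space (path_space T)" if "\<omega> \<in> space M" for \<omega>
        using measurable_space[OF Xm that] .
      ultimately show ?thesis unfolding Adef A'_def by auto
    qed
    have mA: "measure PX A = measure M A'"
      unfolding PX_def using Ams Xm XA by (simp add: measure_distr setsPX)
    have eA: "emeasure PX A \<noteq> 0" "emeasure PX A \<noteq> \<infinity>"
      using Apos px.emeasure_eq_measure by auto
    have ge: "0 \<le> tv_dist (future_law T j (uniform_measure PX A)) (future_law T j PX)"
    proof (rule tv_nonneg)
      have Rm': "(\<lambda>z. restrict z {j..<T}) \<in> measurable (uniform_measure PX A) (PiM {j..<T} (\<lambda>_. borel))"
        using Rm by (simp add: setsPX cong: measurable_cong_sets)
      have "prob_space (uniform_measure PX A)" by (rule prob_space_uniform_measure[OF eA])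
      then show "prob_space (future_law T j (uniform_measure PX A))"
        unfolding future_law_def by (intro prob_space.prob_space_distr Rm')
      show "prob_space (future_law T j PX)"
        unfolding future_law_def using Rm by (intro px.prob_space_distr) (simp add: setsPX cong: measurable_cong_sets)
      show "sets (future_law T j (uniform_measure PX A)) = sets (future_law T j PX)"
        by (simp add: future_law_def)
    qed
    have le: "tv_dist (future_law T j (uniform_measure PX A)) (future_law T j PX) \<le> E"
    proof (rule tv_least)
      fix C assume "C \<in> sets (future_law T j (uniform_measure PX A))"
      then have C: "C \<in> sets (PiM {j..<T} (\<lambda>_. borel))" by (simp add: future_law_def)
      define FC where "FC = {\<omega>\<in>space M. (\<lambda>t\<in>{j..<T}. proc f H V t \<omega>) \<in> C}"
      define D where "D = (\<lambda>z. restrict z {j..<T}) -` C \<inter> space (path_space T)"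
      have Dm: "D \<in> sets PX" unfolding D_def setsPX using Rm C by (rule measurable_sets)
      have XD: "X -` D \<inter> space M = FC"
      proof -
        have "restrict (X \<omega>) {j..<T} = (\<lambda>t\<in>{j..<T}. proc f H V t \<omega>)" for \<omega>
          using ij by (auto simp: X_def fun_eq_iff)
        moreover have "X \<omega> \<in> space (path_space T)" if "\<omega> \<in> space M" for \<omega>
          using measurable_space[OF Xm that] .
        ultimately show ?thesis unfolding D_def FC_def by auto
      qed
      have XAD: "X -` (A \<inter> D) \<inter> space M = A' \<inter> FC" using XA XD by auto
      have ADm: "A \<inter> D \<in> sets PX" using Ams Dm by auto
      have m1: "measure (future_law T j (uniform_measure PX A)) C = measure M (A' \<inter> FC) / measure M A'"
      proof -
        have Rm': "(\<lambda>z. restrict z {j..<T}) \<in> measurable (uniform_measure PX A) (PiM {j..<T} (\<lambda>_. borel))"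
          using Rm by (simp add: setsPX cong: measurable_cong_sets)
        have "measure (future_law T j (uniform_measure PX A)) C = measure (uniform_measure PX A) D"
          unfolding future_law_def D_def using Rm' C by (simp add: measure_distr spPX)
        also have "\<dots> = measure PX (A \<inter> D) / measure PX A"
          using eA Dm by simp
        also have "measure PX (A \<inter> D) = measure M (A' \<inter> FC)"
          unfolding PX_def using ADm Xm XAD by (simp add: measure_distr setsPX)
        finally show ?thesis using mA by simp
      qed
      have m2: "measure (future_law T j PX) C = measure M FC"
      proof -
        have "measure (future_law T j PX) C = measure PX D"
          unfolding future_law_def D_def using Rm C by (simp add: measure_distr spPX setsPX cong: measurable_cong_sets)
        also have "\<dots> = measure M FC"
          unfolding PX_def using Dm Xm XD by (simp add: measure_distr setsPX)
        finally show ?thesis .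
      qed
      have cb: "\<bar>measure M (A' \<inter> FC) - measure M A' * measure M FC\<bar> \<le> measure M A' * E"
        unfolding A'_def FC_def by (rule cond_bound[OF P f indV ij B C E0 E])
      have pos: "measure M A' > 0" using Apos mA by simp
      have "\<bar>measure M (A' \<inter> FC) / measure M A' - measure M FC\<bar>
          = \<bar>measure M (A' \<inter> FC) - measure M A' * measure M FC\<bar> / measure M A'"
        using pos by (simp add: field_simps)
      also have "\<dots> \<le> E" using cb pos by (simp add: divide_le_eq mult.commute)
      finally show "\<bar>measure (future_law T j (uniform_measure PX A)) C - measure (future_law T j PX) C\<bar> \<le> E"
        using m1 m2 by simp
    qed
    show ?thesis using le ge by simp
  qed
  have supE: "(SUP A\<in>S. tv_dist (future_law T j (uniform_measure PX A)) (future_law T j PX)) \<le> E"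
    by (rule cSUP_least) (use Sne each in auto)
  have sup0: "0 \<le> (SUP A\<in>S. tv_dist (future_law T j (uniform_measure PX A)) (future_law T j PX))"
  proof (rule cSUP_upper2[OF _ Sne])
    show "bdd_above ((\<lambda>A. tv_dist (future_law T j (uniform_measure PX A)) (future_law T j PX)) ` S)"
      by (rule bdd_aboveI2[where M=E]) (use each in auto)
    show "0 \<le> tv_dist (future_law T j (uniform_measure PX (space (path_space T)))) (future_law T j PX)"
      using each[OF Sne] by simp
  qed
  show ?thesis
    unfolding gamma_dep_def PX_def[symmetric] X_def[symmetric] S_def[symmetric] using ij supE sup0
    by (simp add: real_sqrt_le_mono)
qed

lemma esssup_nonneg:
  assumes "prob_space N" "\<And>x. 0 \<le> g x"
  shows "0 \<le> esssup N (g :: _ \<Rightarrow> ereal)"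
proof (cases "g \<in> borel_measurable N")
  case True
  have "esssup N (\<lambda>x. 0::ereal) = 0"
    using assms(1) by (intro esssup_const) (simp add: prob_space.emeasure_space_1)
  moreover have "esssup N (\<lambda>x. 0::ereal) \<le> esssup N g"
    by (rule esssup_mono) (auto simp: assms(2))
  ultimately show ?thesis by simp
next
  case False
  then show ?thesis by (simp add: esssup_non_measurable)
qed

lemma bad_measure:
  assumes P: "prob_space M" and Wm: "\<And>s. W' s \<in> borel_measurable M"
    and d: "\<And>s. measure M {\<omega>\<in>space M. R < norm (W' s \<omega>)} \<le> \<delta>"
    and I: "finite I"
  shows "measure M (\<Union>s\<in>I. {\<omega>\<in>space M. R < norm ((W' s \<omega>)::real^'d)}) \<le> real (card I) * \<delta>"
proof -
  have "measure M (\<Union>s\<in>I. {\<omega>\<in>space M. R < norm (W' s \<omega>)}) \<le> (\<Sum>s\<in>I. measure M {\<omega>\<in>space M. R < norm (W' s \<omega>)})"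
    by (rule measure_UNION_le[OF I]) (use Wm in measurable)
  also have "\<dots> \<le> (\<Sum>s\<in>I. \<delta>)" by (intro sum_mono d)
  finally show ?thesis by simp
qed

lemma entry_bound:
  fixes W W' :: "nat \<Rightarrow> 'a \<Rightarrow> real^'d"
  assumes P: "prob_space M" and f: "f \<in> borel_measurable borel"
    and iW: "prob_space.indep_vars M (\<lambda>_. borel) W UNIV"
    and iW': "prob_space.indep_vars M (\<lambda>_. borel) W' UNIV"
    and dW: "\<And>t. distributed M lborel (W t) g"
    and dW': "\<And>t. distributed M lborel (W' t) g"
    and d: "\<And>s. measure M {\<omega>\<in>space M. R < norm (W' s \<omega>)} \<le> \<delta>"
    and V: "V = (\<lambda>t \<omega>. if norm (W' t \<omega>) \<le> R then W' t \<omega> else 0)"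
    and ij: "i < j" "j < T" and b0: "0 \<le> b"
    and mb: "esssup (distr M borel (proc f H V i))
               (\<lambda>x. ereal (sqrt (tv_dist (cond_law M f H W i (j - i) x) (distr M borel (proc f H W j))))) \<le> ereal b"
  shows "0 \<le> gamma_dep T (distr M (path_space T) (\<lambda>\<omega>. \<lambda>t\<in>{..<T}. proc f H V t \<omega>)) i j \<and>
         gamma_dep T (distr M (path_space T) (\<lambda>\<omega>. \<lambda>t\<in>{..<T}. proc f H V t \<omega>)) i j
           \<le> sqrt (2 * (b\<^sup>2 + real (j - i + (j + 1)) * \<delta>))"
proof -
  interpret prob_space M by (rule P)
  define k where "k = j - i"
  have k1: "1 \<le> k" using ij by (simp add: k_def)
  have jk: "j = i + k" using ij by (simp add: k_def)
  have Wm[measurable]: "W s \<in> borel_measurable M" for s using distributed_measurable[OF dW[of s]] by simp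
  have W'm[measurable]: "W' s \<in> borel_measurable M" for s using distributed_measurable[OF dW'[of s]] by simp
  have Vm[measurable]: "V s \<in> borel_measurable M" for s unfolding V by measurable
  have indV: "indep_vars (\<lambda>_. borel) V UNIV"
  proof -
    have "indep_vars (\<lambda>_. borel) (\<lambda>t \<omega>. (\<lambda>x. if norm x \<le> R then x else 0) (W' t \<omega>)) UNIV"
      by (rule indep_vars_compose2[OF iW']) measurable
    then show ?thesis unfolding V by simp
  qed
  have d0: "0 \<le> \<delta>" using d[of 0] measure_nonneg[of M "{\<omega>\<in>space M. R < norm (W' 0 \<omega>)}"] by linarith
  define Bad where "Bad I = (\<Union>s\<in>I. {\<omega>\<in>space M. R < norm (W' s \<omega>)})" for I
  have Badm: "Bad I \<in> sets M" if "finite I" for I unfolding Bad_def using that by measurable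
  have VW': "V s \<omega> = W' s \<omega>" if "\<omega> \<in> space M" "\<omega> \<notin> Bad I" "s \<in> I" for s \<omega> I
    using that unfolding V Bad_def by auto
  define kb where "kb x = distr M borel (\<lambda>\<omega>'. chain_from f H x (\<lambda>s. V (i + Suc s) \<omega>') k)" for x
  define Lj where "Lj = distr M borel (proc f H W j)"
  define Lbj where "Lbj = distr M borel (proc f H V j)"
  define a where "a x = tv_dist (cond_law M f H W i k x) Lj" for x
  have chm: "(\<lambda>\<omega>. chain_from f H x (\<lambda>s. U (i + Suc s) \<omega>) k) \<in> borel_measurable M"
    if "\<And>s. U s \<in> borel_measurable M" for x U
    by (rule chain_meas[OF f]) (use that in auto)
  have pP: "prob_space (distr M borel Z)" if "Z \<in> borel_measurable M" for Z :: "'a \<Rightarrow> real^'d"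
    by (rule prob_space_distr[OF that])
  have c1: "tv_dist (kb x) (cond_law M f H W i k x) \<le> real k * \<delta>" for x
  proof -
    define I where "I = {Suc i..i + k}"
    have I: "finite I" "I \<noteq> {}" "card I = k" using k1 by (auto simp: I_def)
    define G where "G w = chain_from f H x (\<lambda>s. w (i + Suc s)) k" for w :: "nat \<Rightarrow> real^'d"
    have Gm: "G \<in> borel_measurable (PiM I (\<lambda>_. borel))"
      unfolding G_def
      by (rule chain_meas[OF f]) (auto simp: I_def intro!: measurable_component_singleton)
    have GW: "G (\<lambda>s\<in>I. U s \<omega>) = chain_from f H x (\<lambda>s. U (i + Suc s) \<omega>) k" for U \<omega>
      unfolding G_def by (rule chain_from_cong) (auto simp: I_def)
    have "cond_law M f H W i k x = distr M borel (\<lambda>\<omega>. G (\<lambda>s\<in>I. W s \<omega>))"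
      unfolding cond_law_def GW ..
    also have "\<dots> = distr M borel (\<lambda>\<omega>. G (\<lambda>s\<in>I. W' s \<omega>))"
      by (rule law_eq_finite[OF P iW iW' dW dW' I(1,2) Gm])
    also have "\<dots> = distr M borel (\<lambda>\<omega>. chain_from f H x (\<lambda>s. W' (i + Suc s) \<omega>) k)"
      unfolding GW ..
    finally have cl: "cond_law M f H W i k x = distr M borel (\<lambda>\<omega>. chain_from f H x (\<lambda>s. W' (i + Suc s) \<omega>) k)" .
    have "tv_dist (kb x) (cond_law M f H W i k x) \<le> measure M (Bad I)"
      unfolding kb_def cl
    proof (rule tv_coupling[OF P chm[OF Vm] chm[OF W'm] Badm[OF I(1)]])
      fix \<omega> assume "\<omega> \<in> space M" "\<omega> \<notin> Bad I"
      then show "chain_from f H x (\<lambda>s. V (i + Suc s) \<omega>) k = chain_from f H x (\<lambda>s. W' (i + Suc s) \<omega>) k"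
        by (intro chain_from_cong VW') (auto simp: I_def)
    qed
    also have "\<dots> \<le> real k * \<delta>"
      unfolding Bad_def using bad_measure[OF P W'm d I(1)] I(3) by simp
    finally show ?thesis .
  qed
  have c2: "tv_dist Lj Lbj \<le> real (j + 1) * \<delta>"
  proof -
    define I where "I = {..j}"
    have I: "finite I" "I \<noteq> {}" "card I = j + 1" by (auto simp: I_def)
    define G where "G w = Pfun f H w j" for w :: "nat \<Rightarrow> real^'d"
    have Gm: "G \<in> borel_measurable (PiM I (\<lambda>_. borel))"
      unfolding G_def
      by (rule Pfun_meas[OF f]) (auto simp: I_def intro!: measurable_component_singleton)
    have GW: "G (\<lambda>s\<in>I. U s \<omega>) = proc f H U j \<omega>" for U \<omega>
      unfolding G_def I_def by (rule Pfun_restrict) simp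
    have "Lj = distr M borel (\<lambda>\<omega>. G (\<lambda>s\<in>I. W s \<omega>))"
      unfolding Lj_def GW ..
    also have "\<dots> = distr M borel (\<lambda>\<omega>. G (\<lambda>s\<in>I. W' s \<omega>))"
      by (rule law_eq_finite[OF P iW iW' dW dW' I(1,2) Gm])
    also have "\<dots> = distr M borel (proc f H W' j)"
      unfolding GW ..
    finally have cl: "Lj = distr M borel (proc f H W' j)" .
    have "tv_dist Lj Lbj \<le> measure M (Bad I)"
      unfolding cl Lbj_def
    proof (rule tv_coupling[OF P proc_meas[OF f W'm] proc_meas[OF f Vm] Badm[OF I(1)]])
      fix \<omega> assume \<omega>: "\<omega> \<in> space M" "\<omega> \<notin> Bad I"
      have "proc f H W' j \<omega> = Pfun f H (\<lambda>s\<in>I. W' s \<omega>) j" unfolding I_def by (rule Pfun_restrict[symmetric]) simp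
      also have "(\<lambda>s\<in>I. W' s \<omega>) = (\<lambda>s\<in>I. V s \<omega>)"
        using VW'[OF \<omega>] by (intro restrict_ext) auto
      also have "Pfun f H (\<lambda>s\<in>I. V s \<omega>) j = proc f H V j \<omega>" unfolding I_def by (rule Pfun_restrict) simp
      finally show "proc f H W' j \<omega> = proc f H V j \<omega>" .
    qed
    also have "\<dots> \<le> real (j + 1) * \<delta>"
      unfolding Bad_def using bad_measure[OF P W'm d I(1)] I(3) by simp
    finally show ?thesis .
  qed
  have pw: "tv_dist (kb x) Lbj \<le> real k * \<delta> + a x + real (j + 1) * \<delta>" for x
  proof -
    have Pk: "prob_space (kb x)" unfolding kb_def by (rule pP[OF chm[OF Vm]])
    have Pc: "prob_space (cond_law M f H W i k x)" unfolding cond_law_def by (rule pP[OF chm[OF Wm]])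
    have PL: "prob_space Lj" unfolding Lj_def by (rule pP[OF proc_meas[OF f Wm]])
    have PLb: "prob_space Lbj" unfolding Lbj_def by (rule pP[OF proc_meas[OF f Vm]])
    have "tv_dist (kb x) Lbj \<le> tv_dist (kb x) (cond_law M f H W i k x) + tv_dist (cond_law M f H W i k x) Lbj"
      by (rule tv_triangle[OF Pk PLb Pc]) (auto simp: kb_def cond_law_def Lbj_def)
    also have "tv_dist (cond_law M f H W i k x) Lbj \<le> tv_dist (cond_law M f H W i k x) Lj + tv_dist Lj Lbj"
      by (rule tv_triangle[OF Pc PLb PL]) (auto simp: Lj_def cond_law_def Lbj_def)
    finally show ?thesis using c1[of x] c2 unfolding a_def by linarith
  qed
  have AEa: "AE \<omega> in M. a (proc f H V i \<omega>) \<le> b\<^sup>2"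
  proof -
    have "AE x in distr M borel (proc f H V i). ereal (sqrt (a x)) \<le> ereal b"
      using esssup_AE[where M="distr M borel (proc f H V i)" and f="\<lambda>x. ereal (sqrt (a x))"] mb
      unfolding a_def Lj_def k_def by (elim eventually_mono) (erule order_trans)
    then have "AE \<omega> in M. ereal (sqrt (a (proc f H V i \<omega>))) \<le> ereal b"
      by (rule AE_distrD[OF proc_meas[OF f Vm]])
    then show ?thesis
    proof (rule eventually_mono)
      fix \<omega> assume "ereal (sqrt (a (proc f H V i \<omega>))) \<le> ereal b"
      then have "sqrt (a (proc f H V i \<omega>)) \<le> b" by simp
      moreover have a0: "0 \<le> a (proc f H V i \<omega>)" unfolding a_def cond_law_def Lj_def
        by (rule tv_nonneg[OF pP[OF chm[OF Wm]] pP[OF proc_meas[OF f Wm]]]) simp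
      ultimately have "(sqrt (a (proc f H V i \<omega>)))\<^sup>2 \<le> b\<^sup>2" by (intro power_mono) auto
      then show "a (proc f H V i \<omega>) \<le> b\<^sup>2" using a0 by simp
    qed
  qed
  define E where "E = b\<^sup>2 + real (j - i + (j + 1)) * \<delta>"
  have E0: "0 \<le> E" unfolding E_def using d0 by simp
  have AEE: "AE \<omega> in M. tv_dist (distr M borel (\<lambda>\<omega>'. chain_from f H (proc f H V i \<omega>) (\<lambda>s. V (i + Suc s) \<omega>') (j - i)))
                               (distr M borel (proc f H V j)) \<le> E"
    using AEa
  proof (rule eventually_mono)
    fix \<omega> assume "a (proc f H V i \<omega>) \<le> b\<^sup>2"
    then show "tv_dist (distr M borel (\<lambda>\<omega>'. chain_from f H (proc f H V i \<omega>) (\<lambda>s. V (i + Suc s) \<omega>') (j - i)))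
                               (distr M borel (proc f H V j)) \<le> E"
      using pw[of "proc f H V i \<omega>"] unfolding kb_def Lbj_def E_def k_def by (simp add: algebra_simps)
  qed
  show ?thesis
    using gamma_entry_bound[OF P f indV ij E0 AEE] unfolding E_def .
qed

lemma delta_T:
  assumes "T \<ge> (2::nat)"
  shows "exp (-((sqrt (6 * ln (real T)))\<^sup>2)/2) = 1 / real T ^ 3"
proof -
  have lnT: "0 \<le> ln (real T)" using assms by simp
  have "-((sqrt (6 * ln (real T)))\<^sup>2)/2 = - (of_nat 3 * ln (real T))" using lnT by simp
  then have "exp (-((sqrt (6 * ln (real T)))\<^sup>2)/2) = inverse (exp (of_nat 3 * ln (real T)))"
    by (simp add: exp_minus)
  also have "exp (of_nat 3 * ln (real T)) = real T ^ 3"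
    unfolding exp_of_nat_mult using assms by simp
  finally show ?thesis by (simp add: inverse_eq_divide)
qed

lemma entry_arith:
  fixes b \<delta> :: real and n T :: nat
  assumes b0: "0 \<le> b" and T: "T \<ge> 2" and n: "n \<le> 2 * T" and d: "\<delta> = 1 / real T ^ 3"
  shows "sqrt (2 * (b\<^sup>2 + real n * \<delta>)) \<le> sqrt 2 * b + 2 / real T"
proof -
  have d0: "0 \<le> \<delta>" using d by simp
  have "sqrt (2 * (b\<^sup>2 + real n * \<delta>)) = sqrt (2 * b\<^sup>2 + 2 * real n * \<delta>)" by (simp add: algebra_simps)
  also have "\<dots> \<le> sqrt (2 * b\<^sup>2) + sqrt (2 * real n * \<delta>)"
    using d0 by (intro sqrt_add_le_add_sqrt) auto
  also have "sqrt (2 * b\<^sup>2) = sqrt 2 * b" using b0 by (simp add: real_sqrt_mult)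
  also have "sqrt (2 * real n * \<delta>) \<le> 2 / real T"
  proof -
    have Tp: "real T > 0" using T by simp
    have "2 * real n * \<delta> \<le> 2 * (2 * real T) * \<delta>" using n d0 by (intro mult_right_mono) auto
    also have "\<dots> = (2 / real T)\<^sup>2" using Tp unfolding d by (simp add: power2_eq_square field_simps power3_eq_cube)
    finally have "sqrt (2 * real n * \<delta>) \<le> sqrt ((2 / real T)\<^sup>2)" by (rule real_sqrt_le_mono)
    then show ?thesis using Tp by simp
  qed
  finally show ?thesis by simp
qed

lemma final_arith:
  fixes b :: "nat \<Rightarrow> real" and T :: nat
  assumes T: "T \<ge> 2"
  shows "(\<Sum>k<T. if k = 0 then 1 else sqrt 2 * b k + 2 / real T) \<le> 3 + sqrt 2 * (\<Sum>k = 1..T - 1. b k)"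
proof -
  have "{..<T} = insert 0 {1..T - 1}" using T by auto
  then have "(\<Sum>k<T. if k = 0 then 1 else sqrt 2 * b k + 2 / real T)
      = 1 + (\<Sum>k = 1..T - 1. sqrt 2 * b k + 2 / real T)"
    by (simp add: sum.insert_if)
  also have "(\<Sum>k = 1..T - 1. sqrt 2 * b k + 2 / real T) = sqrt 2 * (\<Sum>k = 1..T - 1. b k) + real (T - 1) * (2 / real T)"
    by (simp add: sum.distrib sum_distrib_left)
  also have "real (T - 1) * (2 / real T) \<le> 2"
  proof -
    have "real (T - 1) \<le> real T" by simp
    then have "real (T - 1) * (2 / real T) \<le> real T * (2 / real T)" by (intro mult_right_mono) auto
    also have "\<dots> = 2" using T by simp
    finally show ?thesis .
  qed
  finally show ?thesis by simp
qed

theorem proposition12: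
  fixes M :: "'a measure"
    and f :: "real^'d \<Rightarrow> real^'d"
    and H :: "real^'d^'d"
    and W W' :: "nat \<Rightarrow> 'a \<Rightarrow> real^'d"
    and T :: nat and R :: real
  assumes "prob_space M"
    and "T \<ge> 2"
    and "f \<in> borel_measurable borel"
    and "R \<ge> sqrt (real CARD('d)) + sqrt (6 * ln (real T))"
    and "prob_space.indep_vars M (\<lambda>_. borel) W UNIV"
    and "\<And>t. distributed M lborel (W t) (\<lambda>x. ennreal (std_gauss_density x))"
    and "prob_space.indep_vars M (\<lambda>_. borel) W' UNIV"
    and "\<And>t. distributed M lborel (W' t) (\<lambda>x. ennreal (std_gauss_density x))"
  shows
    "let Wbar = (\<lambda>t \<omega>. if norm (W' t \<omega>) \<le> R then W' t \<omega> else 0);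
         X = proc f H W;
         Xbar = proc f H Wbar;
         P_Xbar = distr M (path_space T) (\<lambda>\<omega>. \<lambda>t\<in>{..<T}. Xbar t \<omega>)
     in ereal (op_norm T (gamma_dep T P_Xbar))
        \<le> 3 + ereal (sqrt 2) *
            (\<Sum>k = 1..T - 1. Max ((\<lambda>t. esssup (distr M borel (Xbar t))
                 (\<lambda>x. ereal (sqrt (tv_dist (cond_law M f H W t k x) (distr M borel (X (t + k)))))))
               ` {0..T - 1 - k}))"
proof -
  interpret prob_space M by (rule assms(1))
  note P = assms(1) and f = assms(3) and iW = assms(5) and iW' = assms(7)
  note dW = assms(6) and dW' = assms(8)
  have T2: "T \<ge> 2" by (rule assms(2))
  define V where "V = (\<lambda>t \<omega>. if norm (W' t \<omega>) \<le> R then W' t \<omega> else (0::real^'d))"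
  define \<delta> where "\<delta> = 1 / real T ^ 3"
  have d: "measure M {\<omega>\<in>space M. R < norm (W' s \<omega>)} \<le> \<delta>" for s
  proof -
    have "measure M {\<omega>\<in>space M. R < norm (W' s \<omega>)} \<le> exp (-((sqrt (6 * ln (real T)))\<^sup>2)/2)"
      by (rule gauss_tail[OF P dW'[of s] _ assms(4)]) (use T2 in simp)
    then show ?thesis unfolding delta_T[OF T2] \<delta>_def .
  qed
  have Wm[measurable]: "W s \<in> borel_measurable M" for s using distributed_measurable[OF dW[of s]] by simp
  have Vm[measurable]: "V s \<in> borel_measurable M" for s
  proof -
    have "W' s \<in> borel_measurable M" using distributed_measurable[OF dW'[of s]] by simp
    then show ?thesis unfolding V_def by measurable
  qed
  define m where "m t k = esssup (distr M borel (proc f H V t))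
                 (\<lambda>x. ereal (sqrt (tv_dist (cond_law M f H W t k x) (distr M borel (proc f H W (t + k))))))" for t k
  define MX where "MX k = Max ((\<lambda>t. m t k) ` {0..T - 1 - k})" for k
  have m0: "0 \<le> m t k" for t k
    unfolding m_def
  proof (rule esssup_nonneg)
    show "prob_space (distr M borel (proc f H V t))" by (rule prob_space_distr) (rule proc_meas[OF f Vm])
    fix x
    have "0 \<le> tv_dist (cond_law M f H W t k x) (distr M borel (proc f H W (t + k)))"
    proof (rule tv_nonneg)
      show "prob_space (cond_law M f H W t k x)" unfolding cond_law_def
        by (rule prob_space_distr) (rule chain_meas[OF f], auto)
      show "prob_space (distr M borel (proc f H W (t + k)))"
        by (rule prob_space_distr) (rule proc_meas[OF f Wm])
    qed (simp add: cond_law_def)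
    then show "0 \<le> ereal (sqrt (tv_dist (cond_law M f H W t k x) (distr M borel (proc f H W (t + k)))))"
      by simp
  qed
  have MXge: "m t k \<le> MX k" if "t \<le> T - 1 - k" for t k
    unfolding MX_def using that by (intro Max_ge) auto
  have MX0: "0 \<le> MX k" for k using order_trans[OF m0 MXge[of 0 k]] by simp
  have main: "ereal (op_norm T (gamma_dep T (distr M (path_space T) (\<lambda>\<omega>. \<lambda>t\<in>{..<T}. proc f H V t \<omega>))))
      \<le> 3 + ereal (sqrt 2) * (\<Sum>k = 1..T - 1. MX k)"
  proof (cases "\<exists>k\<in>{1..T - 1}. MX k = \<infinity>")
    case True
    then have "(\<Sum>k = 1..T - 1. MX k) = \<infinity>" by (simp add: sum_Pinfty)
    then show ?thesis by simp
  next
    case False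
    define b where "b k = real_of_ereal (MX k)" for k
    have MXb: "MX k = ereal (b k)" if "k \<in> {1..T - 1}" for k
      using False that MX0[of k] unfolding b_def by (cases "MX k") auto
    have b0: "0 \<le> b k" for k using MX0[of k] unfolding b_def by (simp add: real_of_ereal_pos)
    define G where "G = gamma_dep T (distr M (path_space T) (\<lambda>\<omega>. \<lambda>t\<in>{..<T}. proc f H V t \<omega>))"
    define bb where "bb k = (if k = 0 then 1 else sqrt 2 * b k + 2 / real T)" for k
    have Gb: "\<bar>G i j\<bar> \<le> (if i \<le> j then bb (j - i) else 0)" if "i < T" "j < T" for i j
    proof (cases "i < j")
      case True
      have k: "j - i \<in> {1..T - 1}" using True that by auto
      have mb: "esssup (distr M borel (proc f H V i))
               (\<lambda>x. ereal (sqrt (tv_dist (cond_law M f H W i (j - i) x) (distr M borel (proc f H W j))))) \<le> ereal (b (j - i))"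
      proof -
        have "m i (j - i) \<le> MX (j - i)" using True that by (intro MXge) auto
        then show ?thesis unfolding m_def MXb[OF k] using True by simp
      qed
      note eb = entry_bound[OF P f iW iW' dW dW' d V_def True \<open>j < T\<close> b0 mb]
      have "G i j \<le> sqrt (2 * ((b (j - i))\<^sup>2 + real (j - i + (j + 1)) * \<delta>))"
        using eb unfolding G_def by simp
      also have "\<dots> \<le> sqrt 2 * b (j - i) + 2 / real T"
        by (rule entry_arith[OF b0 T2 _ \<delta>_def]) (use that in simp)
      then show ?thesis using True eb unfolding G_def bb_def by auto
    next
      case False
      then show ?thesis
        by (cases "i = j") (auto simp: G_def gamma_dep_def bb_def)
    qed
    have "op_norm T G \<le> (\<Sum>k<T. bb k)"
      by (rule op_norm_bound[OF Gb]) (auto simp: bb_def b0)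
    also have "\<dots> \<le> 3 + sqrt 2 * (\<Sum>k = 1..T - 1. b k)"
      unfolding bb_def by (rule final_arith[OF T2])
    finally have "ereal (op_norm T G) \<le> ereal (3 + sqrt 2 * (\<Sum>k = 1..T - 1. b k))" by simp
    also have "ereal (3 + sqrt 2 * (\<Sum>k = 1..T - 1. b k)) = 3 + ereal (sqrt 2) * (\<Sum>k = 1..T - 1. MX k)"
      using MXb by simp
    finally show ?thesis unfolding G_def .
  qed
  show ?thesis unfolding Let_def using main unfolding V_def m_def MX_def .
qed

end
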